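(* Let the setting and the algorithm RandProx-DY be as in the context. Suppose that $\mu_f>0$ or $\mu_g>0$, that $\mu_{h^*}>0$, and that $0<\gamma<\frac{2}{L_f}$. For $t\ge0$ let $\Psi^t:=\frac{1}{\gamma}\|x^t-x^\star\|^2+(1+\omega)\big(\gamma(1+\omega)+2\mu_{h^*}\big)\|u^t-u^\star\|^2$, where $x^\star,u^\star$ are the unique solutions of the primal and dual problems. Then for every $t\ge0$, $\mathbb{E}[\Psi^t]\le c^t\Psi^0$, where $$c:=\max\left(\frac{(1-\gamma\mu_f)^2}{1+\gamma\mu_g},\ \frac{(\gamma L_f-1)^2}{1+\gamma\mu_g},\ 1-\frac{\frac{2}{\gamma}\mu_{h^*}}{(1+\omega)\big(1+\omega+\frac{2}{\gamma}\mu_{h^*}\big)}\right)<1.$$ Moreover, $(x^t)$ and $(\hat{x}^t)$ both converge to $x^\star$ and $(u^t)$ converges to $u^\star$, almost surely.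
   Context: $\mathcal{X}$ finite-dimensional real Hilbert space; $f:\mathcal{X}\to\mathbb{R}$ convex and $L_f$-smooth ($\nabla f$ $L_f$-Lipschitz); $g,h:\mathcal{X}\to\mathbb{R}\cup\{+\infty\}$ proper closed convex. A convex $\phi$ is $\mu_\phi$-strongly convex ($\mu_\phi\ge0$) if $\phi-\frac{\mu_\phi}{2}\|\cdot\|^2$ is convex; $\mu_f,\mu_g,\mu_{h^*}\ge0$ are such constants for $f$, $g$ and the conjugate $h^*$. $\mathrm{prox}_{\gamma\phi}(x):=\arg\min_{x'}(\gamma\phi(x')+\frac12\|x'-x\|^2)$. Primal problem: minimize $f(x)+g(x)+h(x)$; dual: minimize $(f+g)^*(-u)+h^*(u)$. It is assumed there exists $(x^\star,u^\star)$ with $0\in\nabla f(x^\star)+\partial g(x^\star)+u^\star$, $x^\star\in\partial h^*(u^\star)$. Algorithm RandProx-DY: inputs $x^0,u^0\in\mathcal{X}$, $\gamma>0$, $\omega\ge0$; for $t\ge0$: $\hat{x}^t:=\mathrm{prox}_{\gamma g}(x^t-\gamma\nabla f(x^t)-\gamma u^t)$; $d^t:=\mathcal{R}^t\big(\hat{x}^t-\mathrm{prox}_{\gamma(1+\omega)h}(\hat{x}^t+\gamma(1+\omega)u^t)\big)$; $x^{t+1}:=\hat{x}^t-\frac{1}{1+\omega}d^t$; $u^{t+1}:=u^t+\frac{1}{\gamma(1+\omega)^2}d^t$. With $\mathcal{F}_t$ the $\sigma$-algebra generated by $(x^0,u^0),\dots,(x^t,u^t)$ and $r^t:=\hat{x}^t-\mathrm{prox}_{\gamma(1+\omega)h}(\hat{x}^t+\gamma(1+\omega)u^t)$,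 the random estimate satisfies $\mathbb{E}[\mathcal{R}^t(r^t)\mid\mathcal{F}_t]=r^t$ and $\mathbb{E}[\|\mathcal{R}^t(r^t)-r^t\|^2\mid\mathcal{F}_t]\le\omega\|r^t\|^2$. *)

theory Defs
  imports "HOL-Analysis.Analysis" "HOL-Probability.Probability"
begin

definition epigraph :: "('a \<Rightarrow> ereal) \<Rightarrow> ('a \<times> real) set" where
  "epigraph \<phi> = {(x, a). \<phi> x \<le> ereal a}"

definition proper_fun :: "('a \<Rightarrow> ereal) \<Rightarrow> bool" where
  "proper_fun \<phi> \<longleftrightarrow> (\<forall>x. \<phi> x \<noteq> -\<infinity>) \<and> (\<exists>x. \<phi> x \<noteq> \<infinity>)"

definition convex_fun :: "('a::real_vector \<Rightarrow> ereal) \<Rightarrow> bool" where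
  "convex_fun \<phi> \<longleftrightarrow> convex (epigraph \<phi>)"

(* closed = lower semicontinuous = closed epigraph *)
definition closed_fun :: "('a::topological_space \<Rightarrow> ereal) \<Rightarrow> bool" where
  "closed_fun \<phi> \<longleftrightarrow> closed (epigraph \<phi>)"

definition pcc :: "('a::real_normed_vector \<Rightarrow> ereal) \<Rightarrow> bool" where
  "pcc \<phi> \<longleftrightarrow> proper_fun \<phi> \<and> convex_fun \<phi> \<and> closed_fun \<phi>"

definition strongly_convex_fun :: "real \<Rightarrow> ('a::real_normed_vector \<Rightarrow> ereal) \<Rightarrow> bool" where
  "strongly_convex_fun \<mu> \<phi> \<longleftrightarrow> \<mu> \<ge> 0 \<and> convex_fun (\<lambda>x. \<phi> x - ereal (\<mu> / 2 * (norm x)\<^sup>2))"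

definition conjugate :: "('a::real_inner \<Rightarrow> ereal) \<Rightarrow> 'a \<Rightarrow> ereal" where
  "conjugate \<phi> y = (SUP x. ereal (inner x y) - \<phi> x)"

definition subdiff :: "('a::real_inner \<Rightarrow> ereal) \<Rightarrow> 'a \<Rightarrow> 'a set" where
  "subdiff \<phi> x = {v. \<phi> x \<noteq> \<infinity> \<and> (\<forall>y. \<phi> x + ereal (inner v (y - x)) \<le> \<phi> y)}"

definition prox :: "real \<Rightarrow> ('a::real_normed_vector \<Rightarrow> ereal) \<Rightarrow> 'a \<Rightarrow> 'a" where
  "prox \<gamma> \<phi> x = (THE p. \<forall>z. ereal \<gamma> * \<phi> p + ereal ((norm (p - x))\<^sup>2 / 2)
                              \<le> ereal \<gamma> * \<phi> z + ereal ((norm (z - x))\<^sup>2 / 2))"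

definition dy_xhat :: "real \<Rightarrow> ('a::real_inner \<Rightarrow> 'a) \<Rightarrow> ('a \<Rightarrow> ereal) \<Rightarrow> 'a \<Rightarrow> 'a \<Rightarrow> 'a" where
  "dy_xhat \<gamma> gradf g x u = prox \<gamma> g (x - \<gamma> *\<^sub>R gradf x - \<gamma> *\<^sub>R u)"

definition dy_res :: "real \<Rightarrow> real \<Rightarrow> ('a::real_inner \<Rightarrow> ereal) \<Rightarrow> 'a \<Rightarrow> 'a \<Rightarrow> 'a" where
  "dy_res \<gamma> om h xh u = xh - prox (\<gamma> * (1 + om)) h (xh + (\<gamma> * (1 + om)) *\<^sub>R u)"

definition gen_filtration ::
  "'s measure \<Rightarrow> (nat \<Rightarrow> 's \<Rightarrow> 'a::euclidean_space) \<Rightarrow> (nat \<Rightarrow> 's \<Rightarrow> 'a) \<Rightarrow> nat \<Rightarrow> 's measure" where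
  "gen_filtration M x u t = sigma (space M)
     {(\<lambda>s. (x i s, u i s)) -` B \<inter> space M | i B. i \<le> t \<and> B \<in> sets (borel :: ('a \<times> 'a) measure)}"

definition dy_lyap :: "real \<Rightarrow> real \<Rightarrow> real \<Rightarrow> 'a::real_normed_vector \<Rightarrow> 'a \<Rightarrow> 'a \<Rightarrow> 'a \<Rightarrow> real" where
  "dy_lyap \<gamma> om muh xs us x u =
     1 / \<gamma> * (norm (x - xs))\<^sup>2 + (1 + om) * (\<gamma> * (1 + om) + 2 * muh) * (norm (u - us))\<^sup>2"

end

theory Submission
  imports Defs
begin

lemma line_deriv:
  fixes \<phi> :: "'a::euclidean_space \<Rightarrow> real"
  assumes "\<And>y. (\<phi> has_derivative (\<lambda>v. inner (G y) v)) (at y)"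
  shows "((\<lambda>s. \<phi> (x + s *\<^sub>R h)) has_real_derivative inner (G (x + s *\<^sub>R h)) h) (at s)"
proof -
  have d1: "((\<lambda>s. x + s *\<^sub>R h) has_derivative (\<lambda>t. t *\<^sub>R h)) (at s)"
    by (auto intro!: derivative_eq_intros)
  have "((\<lambda>s. \<phi> (x + s *\<^sub>R h)) has_derivative (\<lambda>t. inner (G (x + s *\<^sub>R h)) (t *\<^sub>R h))) (at s)"
    by (rule has_derivative_compose[OF d1 assms])
  moreover have "(\<lambda>t. inner (G (x + s *\<^sub>R h)) (t *\<^sub>R h)) = (*) (inner (G (x + s *\<^sub>R h)) h)"
    by (auto simp: fun_eq_iff)
  ultimately show ?thesis by (simp add: has_field_derivative_def)
qed

lemma tangent_ineq:
  fixes \<phi> :: "'a::euclidean_space \<Rightarrow> real"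
  assumes d: "\<And>y. (\<phi> has_derivative (\<lambda>v. inner (G y) v)) (at y)"
    and c: "convex_on UNIV \<phi>"
  shows "\<phi> y \<ge> \<phi> x + inner (G x) (y - x)"
proof -
  let ?k = "\<lambda>s. \<phi> (x + s *\<^sub>R (y - x))"
  have ck: "convex_on UNIV ?k"
  proof (rule convex_onI)
    fix t a b :: real assume t: "0 < t" "t < 1"
    have "x + ((1 - t) * a + t * b) *\<^sub>R (y - x) = (1 - t) *\<^sub>R (x + a *\<^sub>R (y - x)) + t *\<^sub>R (x + b *\<^sub>R (y - x))"
      by (simp add: algebra_simps)
    then show "?k ((1 - t) *\<^sub>R a + t *\<^sub>R b) \<le> (1 - t) * ?k a + t * ?k b"
      using convex_onD[OF c, of t "x + a *\<^sub>R (y - x)" "x + b *\<^sub>R (y - x)"] t by simp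
  qed auto
  have "?k 1 - ?k 0 \<ge> inner (G (x + 0 *\<^sub>R (y - x))) (y - x) * (1 - 0)"
  proof (rule convex_on_imp_above_tangent[OF ck])
    show "(?k has_real_derivative inner (G (x + 0 *\<^sub>R (y - x))) (y - x)) (at 0 within UNIV)"
      using line_deriv[OF d, of x "y - x" 0] by simp
  qed auto
  then show ?thesis by simp
qed

lemma descent_lemma:
  fixes f :: "'a::euclidean_space \<Rightarrow> real"
  assumes d: "\<And>y. (f has_derivative (\<lambda>v. inner (G y) v)) (at y)"
    and L: "\<And>y z. norm (G y - G z) \<le> L * norm (y - z)"
  shows "f y \<le> f x + inner (G x) (y - x) + L / 2 * (norm (y - x))\<^sup>2"
proof -
  let ?h = "y - x"
  let ?k = "\<lambda>s. f (x + s *\<^sub>R ?h) - s * inner (G x) ?h - L / 2 * s\<^sup>2 * (norm ?h)\<^sup>2"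
  have "?k 0 \<ge> ?k 1"
  proof (rule DERIV_nonpos_imp_nonincreasing[of 0 1 ?k])
    fix s :: real assume s: "0 \<le> s" "s \<le> 1"
    have "(?k has_real_derivative inner (G (x + s *\<^sub>R ?h)) ?h - inner (G x) ?h - L / 2 * (2 * s) * (norm ?h)\<^sup>2) (at s)"
      by (auto intro!: derivative_eq_intros line_deriv[OF d])
    moreover have "inner (G (x + s *\<^sub>R ?h)) ?h - inner (G x) ?h - L / 2 * (2 * s) * (norm ?h)\<^sup>2 \<le> 0"
    proof -
      have "inner (G (x + s *\<^sub>R ?h)) ?h - inner (G x) ?h = inner (G (x + s *\<^sub>R ?h) - G x) ?h"
        by (simp add: inner_diff_left)
      also have "\<dots> \<le> norm (G (x + s *\<^sub>R ?h) - G x) * norm ?h" by (rule norm_cauchy_schwarz)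
      also have "\<dots> \<le> L * norm (s *\<^sub>R ?h) * norm ?h"
        using L[of "x + s *\<^sub>R ?h" x] by (simp add: mult_right_mono)
      also have "\<dots> = L * s * (norm ?h)\<^sup>2" using s by (simp add: power2_eq_square)
      finally show ?thesis by simp
    qed
    ultimately show "\<exists>y. (?k has_real_derivative y) (at s) \<and> y \<le> 0" by blast
  qed simp
  then show ?thesis by simp
qed

lemma sq_deriv:
  fixes f :: "'a::euclidean_space \<Rightarrow> real"
  assumes d: "\<And>y. (f has_derivative (\<lambda>v. inner (G y) v)) (at y)"
  shows "((\<lambda>y. f y - \<mu> / 2 * (norm y)\<^sup>2) has_derivative (\<lambda>v. inner (G y - \<mu> *\<^sub>R y) v)) (at y)"
proof -
  have e: "(\<lambda>y. f y - \<mu> / 2 * (norm y)\<^sup>2) = (\<lambda>y. f y - \<mu> / 2 * inner y y)"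
    by (simp add: power2_norm_eq_inner)
  have "((\<lambda>y. f y - \<mu> / 2 * inner y y) has_derivative (\<lambda>v. inner (G y) v - \<mu> / 2 * (inner y v + inner v y))) (at y)"
    by (auto intro!: derivative_eq_intros d)
  moreover have "(\<lambda>v. inner (G y) v - \<mu> / 2 * (inner y v + inner v y)) = (\<lambda>v. inner (G y - \<mu> *\<^sub>R y) v)"
    by (auto simp: fun_eq_iff inner_diff_left inner_commute algebra_simps)
  ultimately show ?thesis by (simp only: e)
qed

lemma strong_tangent:
  fixes f :: "'a::euclidean_space \<Rightarrow> real"
  assumes d: "\<And>y. (f has_derivative (\<lambda>v. inner (G y) v)) (at y)"
    and sc: "convex_on UNIV (\<lambda>y. f y - \<mu> / 2 * (norm y)\<^sup>2)"
  shows "f y \<ge> f x + inner (G x) (y - x) + \<mu> / 2 * (norm (y - x))\<^sup>2"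
proof -
  have "f y - \<mu> / 2 * (norm y)\<^sup>2 \<ge> f x - \<mu> / 2 * (norm x)\<^sup>2 + inner (G x - \<mu> *\<^sub>R x) (y - x)"
    by (rule tangent_ineq[OF sq_deriv[OF d] sc])
  then show ?thesis
    by (simp add: algebra_simps power2_norm_eq_inner inner_diff_left inner_diff_right inner_commute)
qed

lemma mu_le_L:
  fixes f :: "'a::euclidean_space \<Rightarrow> real"
  assumes d: "\<And>y. (f has_derivative (\<lambda>v. inner (G y) v)) (at y)"
    and L: "\<And>y z. norm (G y - G z) \<le> L * norm (y - z)"
    and sc: "convex_on UNIV (\<lambda>y. f y - \<mu> / 2 * (norm y)\<^sup>2)"
  shows "\<mu> \<le> L" "0 \<le> L"
proof -
  obtain b :: 'a where b: "b \<noteq> 0" using nonzero_Basis SOME_Basis by blast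
  have "f b \<ge> f 0 + inner (G 0) (b - 0) + \<mu> / 2 * (norm (b - 0))\<^sup>2"
    by (rule strong_tangent[OF d sc])
  moreover have "f b \<le> f 0 + inner (G 0) (b - 0) + L / 2 * (norm (b - 0))\<^sup>2"
    by (rule descent_lemma[OF d L])
  ultimately have "\<mu> / 2 * (norm b)\<^sup>2 \<le> L / 2 * (norm b)\<^sup>2" by simp
  moreover have "(norm b)\<^sup>2 > 0" using b by simp
  ultimately show "\<mu> \<le> L" by simp
  have "norm (G b - G 0) \<le> L * norm (b - 0)" by (rule L)
  then have "0 \<le> L * norm b" by (metis norm_ge_zero order_trans diff_zero)
  then show "0 \<le> L" using b by (simp add: zero_le_mult_iff)
qed

lemma limit_eps:
  fixes A B C :: real
  assumes "\<And>e. e > 0 \<Longrightarrow> C \<le> A + e * B"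
  shows "C \<le> A"
proof (rule ccontr)
  assume "\<not> C \<le> A"
  then have c: "C > A" by simp
  show False
  proof (cases "B \<le> 0")
    case True
    then show False using assms[of 1] c by simp
  next
    case False
    then have "C \<le> A + ((C - A) / (2 * B)) * B" using c by (intro assms) auto
    also have "\<dots> = A + (C - A) / 2" using False by (simp add: field_simps)
    finally have "C \<le> A + (C - A) / 2" .
    then show False using c by (simp add: field_simps)
  qed
qed

lemma bh_half:
  fixes \<phi> :: "'a::euclidean_space \<Rightarrow> real"
  assumes tg: "\<And>x y. \<phi> y \<ge> \<phi> x + inner (Gp x) (y - x)"
    and ds: "\<And>x y. \<phi> y \<le> \<phi> x + inner (Gp x) (y - x) + K / 2 * (norm (y - x))\<^sup>2"
    and K: "K > 0"
  shows "\<phi> y \<ge> \<phi> x + inner (Gp x) (y - x) + (norm (Gp y - Gp x))\<^sup>2 / (2 * K)"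
proof -
  define D where "D = Gp y - Gp x"
  define z where "z = y - (1 / K) *\<^sub>R D"
  have t1: "\<phi> z \<ge> \<phi> x + inner (Gp x) (z - x)" by (rule tg)
  have t2: "\<phi> z \<le> \<phi> y + inner (Gp y) (z - y) + K / 2 * (norm (z - y))\<^sup>2" by (rule ds)
  have e1: "inner (Gp x) (z - x) = inner (Gp x) (y - x) - (1 / K) * inner (Gp x) D"
    unfolding z_def by (simp add: inner_diff_right algebra_simps)
  have e2: "inner (Gp y) (z - y) = - (1 / K) * inner (Gp y) D"
    unfolding z_def by (simp add: inner_diff_right algebra_simps)
  have e3: "K / 2 * (norm (z - y))\<^sup>2 = (norm D)\<^sup>2 / (2 * K)"
    unfolding z_def using K by (simp add: power2_eq_square field_simps)
  have e4: "inner (Gp y) D - inner (Gp x) D = (norm D)\<^sup>2"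
    unfolding D_def by (simp add: power2_norm_eq_inner inner_diff_left inner_diff_right)
  have "(1 / K) * inner (Gp y) D - (1 / K) * inner (Gp x) D = (1 / K) * (inner (Gp y) D - inner (Gp x) D)"
    by (simp add: right_diff_distrib)
  then have "(1 / K) * inner (Gp y) D - (1 / K) * inner (Gp x) D = (norm D)\<^sup>2 / K"
    using e4 by simp
  moreover have "(norm D)\<^sup>2 / K = (norm D)\<^sup>2 / (2 * K) + (norm D)\<^sup>2 / (2 * K)"
    by (simp add: field_simps)
  ultimately show ?thesis using t1 t2 e1 e2 e3 unfolding D_def by linarith
qed

lemma bh:
  fixes \<phi> :: "'a::euclidean_space \<Rightarrow> real"
  assumes tg: "\<And>x y. \<phi> y \<ge> \<phi> x + inner (Gp x) (y - x)"
    and ds: "\<And>x y. \<phi> y \<le> \<phi> x + inner (Gp x) (y - x) + K / 2 * (norm (y - x))\<^sup>2"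
    and K: "K > 0"
  shows "inner (Gp y - Gp x) (y - x) \<ge> (norm (Gp y - Gp x))\<^sup>2 / K"
proof -
  have h1: "\<phi> y \<ge> \<phi> x + inner (Gp x) (y - x) + (norm (Gp y - Gp x))\<^sup>2 / (2 * K)"
    by (rule bh_half[OF tg ds K])
  have h2: "\<phi> x \<ge> \<phi> y + inner (Gp y) (x - y) + (norm (Gp y - Gp x))\<^sup>2 / (2 * K)"
    using bh_half[OF tg ds K, of y x] by (simp add: norm_minus_commute)
  have "inner (Gp y - Gp x) (y - x) = - inner (Gp y) (x - y) - inner (Gp x) (y - x)"
    by (simp add: inner_diff_left inner_diff_right)
  moreover have "(norm (Gp y - Gp x))\<^sup>2 / K = (norm (Gp y - Gp x))\<^sup>2 / (2 * K) + (norm (Gp y - Gp x))\<^sup>2 / (2 * K)"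
    by (simp add: field_simps)
  ultimately show ?thesis using h1 h2 by linarith
qed

lemma real_step:
  fixes \<mu> L \<gamma> G N H :: real
  assumes "0 \<le> \<mu>" "\<mu> \<le> L" "0 \<le> \<gamma>" "(L + \<mu>) * G \<ge> N + \<mu> * L * H" "\<mu>\<^sup>2 * H \<le> N" "N \<le> L\<^sup>2 * H" "H \<ge> 0" "G \<ge> \<mu> * H"
  shows "H - 2 * \<gamma> * G + \<gamma>\<^sup>2 * N \<le> max ((1 - \<gamma> * \<mu>)\<^sup>2) ((\<gamma> * L - 1)\<^sup>2) * H"
proof (cases "L + \<mu> = 0")
  case True
  then have "\<mu> = 0" "L = 0" using assms by auto
  then show ?thesis using assms by (auto simp: max_def power2_eq_square)
next
  case False
  then have p: "L + \<mu> > 0" using assms by auto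
  have key: "(L + \<mu>) * (H - 2 * \<gamma> * G + \<gamma>\<^sup>2 * N) \<le> (L + \<mu>) * H - 2 * \<gamma> * (N + \<mu> * L * H) + (L + \<mu>) * \<gamma>\<^sup>2 * N"
  proof -
    have "2 * \<gamma> * (N + \<mu> * L * H) \<le> 2 * \<gamma> * ((L + \<mu>) * G)"
      using assms(3,4) by (intro mult_left_mono) auto
    then show ?thesis by (simp add: algebra_simps)
  qed
  show ?thesis
  proof (cases "\<gamma> * (L + \<mu>) \<le> 2")
    case True
    have "(L + \<mu>) * \<gamma>\<^sup>2 * N - 2 * \<gamma> * N \<le> (L + \<mu>) * \<gamma>\<^sup>2 * (\<mu>\<^sup>2 * H) - 2 * \<gamma> * (\<mu>\<^sup>2 * H)"
    proof -
      have "\<gamma> * ((L + \<mu>) * \<gamma> - 2) * N \<le> \<gamma> * ((L + \<mu>) * \<gamma> - 2) * (\<mu>\<^sup>2 * H)"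
      proof (rule mult_left_mono_neg)
        have "(L + \<mu>) * \<gamma> - 2 \<le> 0" using True by (simp add: algebra_simps)
        then show "\<gamma> * ((L + \<mu>) * \<gamma> - 2) \<le> 0" using assms(3) by (rule mult_nonneg_nonpos[rotated])
      qed (use assms in auto)
      then show ?thesis by (simp add: algebra_simps power2_eq_square)
    qed
    then have "(L + \<mu>) * (H - 2 * \<gamma> * G + \<gamma>\<^sup>2 * N) \<le> (L + \<mu>) * ((1 - \<gamma> * \<mu>)\<^sup>2 * H)"
      using key by (simp add: algebra_simps power2_eq_square)
    then have "H - 2 * \<gamma> * G + \<gamma>\<^sup>2 * N \<le> (1 - \<gamma> * \<mu>)\<^sup>2 * H" using p by simp
    also have "\<dots> \<le> max ((1 - \<gamma> * \<mu>)\<^sup>2) ((\<gamma> * L - 1)\<^sup>2) * H" using assms by (intro mult_right_mono) auto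
    finally show ?thesis .
  next
    case False
    have "(L + \<mu>) * \<gamma>\<^sup>2 * N - 2 * \<gamma> * N \<le> (L + \<mu>) * \<gamma>\<^sup>2 * (L\<^sup>2 * H) - 2 * \<gamma> * (L\<^sup>2 * H)"
    proof -
      have "\<gamma> * ((L + \<mu>) * \<gamma> - 2) * N \<le> \<gamma> * ((L + \<mu>) * \<gamma> - 2) * (L\<^sup>2 * H)"
      proof (rule mult_left_mono)
        have "(L + \<mu>) * \<gamma> - 2 \<ge> 0" using False by (simp add: algebra_simps)
        then show "\<gamma> * ((L + \<mu>) * \<gamma> - 2) \<ge> 0" using assms(3) by simp
      qed (use assms in auto)
      then show ?thesis by (simp add: algebra_simps power2_eq_square)
    qed
    then have "(L + \<mu>) * (H - 2 * \<gamma> * G + \<gamma>\<^sup>2 * N) \<le> (L + \<mu>) * ((\<gamma> * L - 1)\<^sup>2 * H)"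
      using key by (simp add: algebra_simps power2_eq_square)
    then have "H - 2 * \<gamma> * G + \<gamma>\<^sup>2 * N \<le> (\<gamma> * L - 1)\<^sup>2 * H" using p by simp
    also have "\<dots> \<le> max ((1 - \<gamma> * \<mu>)\<^sup>2) ((\<gamma> * L - 1)\<^sup>2) * H" using assms by (intro mult_right_mono) auto
    finally show ?thesis .
  qed
qed


lemma grad_step:
  fixes f :: "'a::euclidean_space \<Rightarrow> real"
  assumes d: "\<And>y. (f has_derivative (\<lambda>v. inner (G y) v)) (at y)"
    and L: "\<And>y z. norm (G y - G z) \<le> L * norm (y - z)"
    and mu: "\<mu> \<ge> 0" and sc: "convex_on UNIV (\<lambda>y. f y - \<mu> / 2 * (norm y)\<^sup>2)"
    and gam: "\<gamma> \<ge> 0"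
  shows "(norm ((x - \<gamma> *\<^sub>R G x) - (y - \<gamma> *\<^sub>R G y)))\<^sup>2 \<le> max ((1 - \<gamma> * \<mu>)\<^sup>2) ((\<gamma> * L - 1)\<^sup>2) * (norm (x - y))\<^sup>2"
proof -
  define \<phi> where "\<phi> = (\<lambda>y. f y - \<mu> / 2 * (norm y)\<^sup>2)"
  define Gp where "Gp = (\<lambda>y. G y - \<mu> *\<^sub>R y)"
  have muL: "\<mu> \<le> L" by (rule mu_le_L(1)[OF d L sc])
  have tg: "\<And>x y. \<phi> y \<ge> \<phi> x + inner (Gp x) (y - x)"
    unfolding \<phi>_def Gp_def by (rule tangent_ineq[OF sq_deriv[OF d] sc])
  have ds0: "\<phi> b \<le> \<phi> a + inner (Gp a) (b - a) + (L - \<mu>) / 2 * (norm (b - a))\<^sup>2" for a b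
  proof -
    have "f b \<le> f a + inner (G a) (b - a) + L / 2 * (norm (b - a))\<^sup>2" by (rule descent_lemma[OF d L])
    then show ?thesis unfolding \<phi>_def Gp_def
      by (simp add: field_simps power2_norm_eq_inner inner_diff_left inner_diff_right inner_commute)
  qed
  define h where "h = y - x"
  define g where "g = G y - G x"
  have bhe: "(L - \<mu> + e) * inner (Gp y - Gp x) (y - x) \<ge> (norm (Gp y - Gp x))\<^sup>2" if e: "e > 0" for e
  proof -
    have ds: "\<phi> b \<le> \<phi> a + inner (Gp a) (b - a) + (L - \<mu> + e) / 2 * (norm (b - a))\<^sup>2" for a b
    proof -
      have "(L - \<mu>) / 2 * (norm (b - a))\<^sup>2 \<le> (L - \<mu> + e) / 2 * (norm (b - a))\<^sup>2"
        using e by (intro mult_right_mono) auto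
      then show ?thesis using ds0[where a=a and b=b] by linarith
    qed
    have K: "L - \<mu> + e > 0" using muL e by simp
    have "inner (Gp y - Gp x) (y - x) \<ge> (norm (Gp y - Gp x))\<^sup>2 / (L - \<mu> + e)"
      by (rule bh[OF tg ds K])
    then show ?thesis using K by (simp add: field_simps)
  qed
  have bh0: "(L - \<mu>) * inner (Gp y - Gp x) (y - x) \<ge> (norm (Gp y - Gp x))\<^sup>2"
    by (rule limit_eps[where B = "inner (Gp y - Gp x) (y - x)"]) (use bhe in \<open>simp add: algebra_simps\<close>)
  have e1: "inner (Gp y - Gp x) (y - x) = inner g h - \<mu> * inner h h"
    unfolding Gp_def g_def h_def by (simp add: algebra_simps inner_diff_left inner_diff_right)
  have e2: "(norm (Gp y - Gp x))\<^sup>2 = inner g g - 2 * \<mu> * inner g h + \<mu>\<^sup>2 * inner h h"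
  proof -
    have eq: "Gp y - Gp x = g - \<mu> *\<^sub>R h" unfolding Gp_def g_def h_def by (simp add: algebra_simps)
    show ?thesis unfolding eq
      by (simp add: power2_norm_eq_inner inner_diff_left inner_diff_right inner_commute algebra_simps) (simp add: power2_eq_square)
  qed
  have A1: "(L + \<mu>) * inner g h \<ge> inner g g + \<mu> * L * inner h h"
    using bh0 unfolding e1 e2 by (simp add: algebra_simps power2_eq_square)
  have A2: "inner g h \<ge> \<mu> * inner h h"
  proof -
    have "f y \<ge> f x + inner (G x) (y - x) + \<mu> / 2 * (norm (y - x))\<^sup>2" by (rule strong_tangent[OF d sc])
    moreover have "f x \<ge> f y + inner (G y) (x - y) + \<mu> / 2 * (norm (x - y))\<^sup>2" by (rule strong_tangent[OF d sc])
    moreover have "inner g h = inner (G y) (y - x) - inner (G x) (y - x)"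
      unfolding g_def h_def by (simp add: inner_diff_left)
    moreover have "inner (G y) (x - y) = - inner (G y) (y - x)"
      by (simp add: inner_diff_right)
    moreover have "(norm (y - x))\<^sup>2 = inner h h" "(norm (x - y))\<^sup>2 = inner h h"
      unfolding h_def by (simp_all add: power2_norm_eq_inner[symmetric] norm_minus_commute)
    ultimately show ?thesis by (simp add: algebra_simps) 
  qed
  have A3: "inner g g \<le> L\<^sup>2 * inner h h"
  proof -
    have "norm g \<le> L * norm h" unfolding g_def h_def by (rule L)
    then have "(norm g)\<^sup>2 \<le> (L * norm h)\<^sup>2" by (intro power_mono) auto
    then show ?thesis by (simp add: power2_norm_eq_inner power_mult_distrib)
  qed
  have H0: "inner h h \<ge> 0" by simp
  have A4: "\<mu>\<^sup>2 * inner h h \<le> inner g g"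
  proof (cases "inner h h = 0")
    case True then show ?thesis by simp
  next
    case False
    then have Hp: "inner h h > 0" using H0 by linarith
    have cs: "(inner g h)\<^sup>2 \<le> inner g g * inner h h"
    proof -
      have "\<bar>inner g h\<bar> \<le> norm g * norm h" by (rule Cauchy_Schwarz_ineq2)
      then have "\<bar>inner g h\<bar>\<^sup>2 \<le> (norm g * norm h)\<^sup>2" by (intro power_mono) auto
      then show ?thesis by (simp add: power_mult_distrib power2_norm_eq_inner)
    qed
    have "(\<mu> * inner h h)\<^sup>2 \<le> (inner g h)\<^sup>2"
      using A2 mu H0 by (intro power_mono) auto
    then have "\<mu>\<^sup>2 * inner h h * inner h h \<le> inner g g * inner h h"
      using cs by (simp add: power2_eq_square algebra_simps)
    then show ?thesis using Hp by simp
  qed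
  have "(norm ((x - \<gamma> *\<^sub>R G x) - (y - \<gamma> *\<^sub>R G y)))\<^sup>2 = inner h h - 2 * \<gamma> * inner g h + \<gamma>\<^sup>2 * inner g g"
  proof -
    have eq: "(x - \<gamma> *\<^sub>R G x) - (y - \<gamma> *\<^sub>R G y) = - (h - \<gamma> *\<^sub>R g)"
      unfolding g_def h_def by (simp add: algebra_simps)
    show ?thesis unfolding eq norm_minus_cancel
      by (simp add: power2_norm_eq_inner inner_diff_left inner_diff_right inner_commute algebra_simps) (simp add: power2_eq_square)
  qed
  also have "\<dots> \<le> max ((1 - \<gamma> * \<mu>)\<^sup>2) ((\<gamma> * L - 1)\<^sup>2) * inner h h"
    by (rule real_step[OF mu muL gam A1 A4 A3 H0 A2])
  also have "inner h h = (norm (x - y))\<^sup>2"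
    unfolding h_def by (metis norm_minus_commute power2_norm_eq_inner)
  finally show ?thesis .
qed

lemma limit_s:
  fixes A B C :: real
  assumes "\<And>s. 0 < s \<Longrightarrow> s \<le> 1 \<Longrightarrow> C \<le> A + s * B" and "B \<ge> 0"
  shows "C \<le> A"
proof (rule ccontr)
  assume "\<not> C \<le> A"
  then have c: "C > A" by simp
  then have B: "B > 0" using assms(1)[of 1] assms(2) by auto
  define s where "s = min 1 ((C - A) / (2 * B))"
  have s: "0 < s" "s \<le> 1" using c B by (auto simp: s_def)
  have "s * B \<le> ((C - A) / (2 * B)) * B" unfolding s_def using B by (intro mult_right_mono) auto
  also have "\<dots> = (C - A) / 2" using B by simp
  finally have "C \<le> A + (C - A) / 2" using assms(1)[OF s] by linarith
  then show False using c by (simp add: field_simps)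
qed

lemma cf_ineq:
  assumes "convex_fun \<phi>" "\<phi> x = ereal a" "\<phi> y = ereal b" "0 \<le> s" "s \<le> 1"
  shows "\<phi> ((1 - s) *\<^sub>R x + s *\<^sub>R y) \<le> ereal ((1 - s) * a + s * b)"
proof -
  have "(x, a) \<in> epigraph \<phi>" "(y, b) \<in> epigraph \<phi>" using assms(2,3) by (auto simp: epigraph_def)
  then have "(1 - s) *\<^sub>R (x, a) + s *\<^sub>R (y, b) \<in> epigraph \<phi>"
    using assms(1,4,5) unfolding convex_fun_def by (intro convexD) auto
  then show ?thesis by (simp add: epigraph_def)
qed

lemma comb_sq:
  fixes x y :: "'a::real_inner"
  shows "(norm ((1 - s) *\<^sub>R x + s *\<^sub>R y))\<^sup>2 = (1 - s) * (norm x)\<^sup>2 + s * (norm y)\<^sup>2 - s * (1 - s) * (norm (y - x))\<^sup>2"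
  by (simp add: power2_norm_eq_inner inner_add_left inner_add_right inner_diff_left inner_diff_right inner_commute algebra_simps)

lemma sc_subgrad:
  assumes sc: "strongly_convex_fun \<nu> \<phi>" and nm: "\<And>x. \<phi> x \<noteq> -\<infinity>" and v: "v \<in> subdiff \<phi> x"
  shows "\<phi> x + ereal (inner v (y - x) + \<nu> / 2 * (norm (y - x))\<^sup>2) \<le> \<phi> y"
proof (cases "\<phi> y = \<infinity>")
  case True then show ?thesis by simp
next
  case False
  have vx: "\<phi> x \<noteq> \<infinity>" "\<And>z. \<phi> x + ereal (inner v (z - x)) \<le> \<phi> z" using v by (auto simp: subdiff_def)
  obtain a where a: "\<phi> x = ereal a" using vx(1) nm[of x] by (cases "\<phi> x") auto
  obtain b where b: "\<phi> y = ereal b" using False nm[of y] by (cases "\<phi> y") auto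
  have nu: "\<nu> \<ge> 0" and cv: "convex_fun (\<lambda>x. \<phi> x - ereal (\<nu> / 2 * (norm x)\<^sup>2))"
    using sc by (auto simp: strongly_convex_fun_def)
  define d where "d = y - x"
  have key: "b - a - inner v d \<ge> (1 - s) * (\<nu> / 2 * (norm d)\<^sup>2)" if s: "0 < s" "s \<le> 1" for s
  proof -
    define zs where "zs = (1 - s) *\<^sub>R x + s *\<^sub>R y"
    have le1: "\<phi> zs - ereal (\<nu> / 2 * (norm zs)\<^sup>2) \<le> ereal ((1 - s) * (a - \<nu> / 2 * (norm x)\<^sup>2) + s * (b - \<nu> / 2 * (norm y)\<^sup>2))"
      unfolding zs_def by (rule cf_ineq[OF cv]) (use a b s in auto)
    have zx: "zs - x = s *\<^sub>R d" unfolding zs_def d_def by (simp add: algebra_simps)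
    have ge1: "ereal (a + s * inner v d) \<le> \<phi> zs" using vx(2)[of zs] a zx by simp
    have "\<phi> zs \<noteq> \<infinity>" using le1 by auto
    then obtain w where w: "\<phi> zs = ereal w" using nm[of zs] by (cases "\<phi> zs") auto
    have r1: "w - \<nu> / 2 * (norm zs)\<^sup>2 \<le> (1 - s) * (a - \<nu> / 2 * (norm x)\<^sup>2) + s * (b - \<nu> / 2 * (norm y)\<^sup>2)"
      using le1 w by simp
    have r2: "a + s * inner v d \<le> w" using ge1 w by simp
    have nz: "(norm zs)\<^sup>2 = (1 - s) * (norm x)\<^sup>2 + s * (norm y)\<^sup>2 - s * (1 - s) * (norm d)\<^sup>2"
      unfolding zs_def d_def by (rule comb_sq)
    have "s * (b - a - inner v d) \<ge> s * ((1 - s) * (\<nu> / 2 * (norm d)\<^sup>2))"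
      using r1[unfolded nz] r2 by (simp add: field_simps)
    then show ?thesis using s by simp
  qed
  have "\<nu> / 2 * (norm d)\<^sup>2 \<le> b - a - inner v d"
  proof (rule limit_s[where B = "\<nu> / 2 * (norm d)\<^sup>2"])
    fix s :: real assume "0 < s" "s \<le> 1"
    then show "\<nu> / 2 * (norm d)\<^sup>2 \<le> b - a - inner v d + s * (\<nu> / 2 * (norm d)\<^sup>2)"
      using key[of s] by (simp add: field_simps)
  qed (use nu in auto)
  then show ?thesis using a b unfolding d_def by simp
qed

lemma sc_mono:
  assumes sc: "strongly_convex_fun \<nu> \<phi>" and nm: "\<And>x. \<phi> x \<noteq> -\<infinity>"
    and v1: "v1 \<in> subdiff \<phi> x1" and v2: "v2 \<in> subdiff \<phi> x2"
  shows "inner (v1 - v2) (x1 - x2) \<ge> \<nu> * (norm (x1 - x2))\<^sup>2"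
proof -
  obtain a1 where a1: "\<phi> x1 = ereal a1" using v1 nm[of x1] by (cases "\<phi> x1") (auto simp: subdiff_def)
  obtain a2 where a2: "\<phi> x2 = ereal a2" using v2 nm[of x2] by (cases "\<phi> x2") (auto simp: subdiff_def)
  have "a1 + (inner v1 (x2 - x1) + \<nu> / 2 * (norm (x2 - x1))\<^sup>2) \<le> a2"
    using sc_subgrad[OF sc nm v1, of x2] a1 a2 by simp
  moreover have "a2 + (inner v2 (x1 - x2) + \<nu> / 2 * (norm (x1 - x2))\<^sup>2) \<le> a1"
    using sc_subgrad[OF sc nm v2, of x1] a1 a2 by simp
  moreover have "norm (x2 - x1) = norm (x1 - x2)" by (rule norm_minus_commute)
  moreover have "inner (v1 - v2) (x1 - x2) = - inner v1 (x2 - x1) - inner v2 (x1 - x2)"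
    by (simp add: inner_diff_left inner_diff_right)
  ultimately show ?thesis by (simp add: algebra_simps)
qed


lemma sq_expand:
  fixes y p z :: "'a::real_inner"
  shows "(norm (y - z))\<^sup>2 = (norm (y - p))\<^sup>2 + 2 * inner (y - p) (p - z) + (norm (p - z))\<^sup>2"
  by (simp add: power2_norm_eq_inner inner_diff_left inner_diff_right inner_commute algebra_simps)

lemma prox_key:
  assumes t: "t > 0" and nm: "\<And>x. \<phi> x \<noteq> -\<infinity>"
    and sg: "(1 / t) *\<^sub>R (z - p) \<in> subdiff \<phi> p" and a: "\<phi> p = ereal a"
  shows "ereal (t * a + (norm (p - z))\<^sup>2 / 2 + (norm (y - p))\<^sup>2 / 2) \<le> ereal t * \<phi> y + ereal ((norm (y - z))\<^sup>2 / 2)"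
proof (cases "\<phi> y = \<infinity>")
  case True then show ?thesis using t by simp
next
  case False
  then obtain b where b: "\<phi> y = ereal b" using nm[of y] by (cases "\<phi> y") auto
  have "\<phi> p + ereal (inner ((1 / t) *\<^sub>R (z - p)) (y - p)) \<le> \<phi> y" using sg by (auto simp: subdiff_def)
  then have "a + (1 / t) * inner (z - p) (y - p) \<le> b" using a b by simp
  then have "t * a + inner (z - p) (y - p) \<le> t * b" using t by (simp add: field_simps)
  moreover have "inner (y - p) (p - z) = - inner (z - p) (y - p)"
    by (simp add: inner_commute inner_diff_left inner_diff_right)
  ultimately show ?thesis using b sq_expand[of y z p] by (simp add: field_simps)
qed

lemma prox_char:
  assumes t: "t > 0" and nm: "\<And>x. \<phi> x \<noteq> -\<infinity>"
    and sg: "(1 / t) *\<^sub>R (z - p) \<in> subdiff \<phi> p"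
  shows "prox t \<phi> z = p"
proof -
  obtain a where a: "\<phi> p = ereal a" using sg nm[of p] by (cases "\<phi> p") (auto simp: subdiff_def)
  have K: "ereal (t * a + (norm (p - z))\<^sup>2 / 2 + (norm (y - p))\<^sup>2 / 2) \<le> ereal t * \<phi> y + ereal ((norm (y - z))\<^sup>2 / 2)" for y
    by (rule prox_key[OF t nm sg a])
  have Pp: "ereal t * \<phi> p + ereal ((norm (p - z))\<^sup>2 / 2) \<le> ereal t * \<phi> y + ereal ((norm (y - z))\<^sup>2 / 2)" for y
  proof -
    have "ereal t * \<phi> p + ereal ((norm (p - z))\<^sup>2 / 2) = ereal (t * a + (norm (p - z))\<^sup>2 / 2)" using a by simp
    also have "\<dots> \<le> ereal (t * a + (norm (p - z))\<^sup>2 / 2 + (norm (y - p))\<^sup>2 / 2)" by simp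
    also have "\<dots> \<le> ereal t * \<phi> y + ereal ((norm (y - z))\<^sup>2 / 2)" by (rule K)
    finally show ?thesis .
  qed
  show ?thesis unfolding prox_def
  proof (rule the_equality)
    show "\<forall>y. ereal t * \<phi> p + ereal ((norm (p - z))\<^sup>2 / 2) \<le> ereal t * \<phi> y + ereal ((norm (y - z))\<^sup>2 / 2)"
      using Pp by blast
  next
    fix q assume "\<forall>y. ereal t * \<phi> q + ereal ((norm (q - z))\<^sup>2 / 2) \<le> ereal t * \<phi> y + ereal ((norm (y - z))\<^sup>2 / 2)"
    then have q1: "ereal t * \<phi> q + ereal ((norm (q - z))\<^sup>2 / 2) \<le> ereal (t * a + (norm (p - z))\<^sup>2 / 2)"
      using a by (metis times_ereal.simps(1) plus_ereal.simps(1))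
    have "\<phi> q \<noteq> \<infinity>"
    proof
      assume "\<phi> q = \<infinity>" then show False using q1 t by simp
    qed
    then obtain c where c: "\<phi> q = ereal c" using nm[of q] by (cases "\<phi> q") auto
    have "t * c + (norm (q - z))\<^sup>2 / 2 \<le> t * a + (norm (p - z))\<^sup>2 / 2" using q1 c by simp
    moreover have "t * a + (norm (p - z))\<^sup>2 / 2 + (norm (q - p))\<^sup>2 / 2 \<le> t * c + (norm (q - z))\<^sup>2 / 2"
      using K[of q] c by simp
    ultimately have "(norm (q - p))\<^sup>2 \<le> 0" by linarith
    then show "q = p" by simp
  qed
qed

lemma conj_ge: "ereal (inner x y) - \<phi> x \<le> conjugate \<phi> y"
  unfolding conjugate_def by (rule SUP_upper) simp

lemma subgrad_conj:
  assumes nm: "\<And>x. \<phi> x \<noteq> -\<infinity>" and v: "v \<in> subdiff \<phi> p" and a: "\<phi> p = ereal a"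
  shows "conjugate \<phi> v = ereal (inner p v - a)" "p \<in> subdiff (conjugate \<phi>) v"
proof -
  have up: "ereal (inner x v) - \<phi> x \<le> ereal (inner p v - a)" for x
  proof (cases "\<phi> x = \<infinity>")
    case True then show ?thesis by simp
  next
    case False
    then obtain b where b: "\<phi> x = ereal b" using nm[of x] by (cases "\<phi> x") auto
    have "\<phi> p + ereal (inner v (x - p)) \<le> \<phi> x" using v by (auto simp: subdiff_def)
    then have "a + inner v (x - p) \<le> b" using a b by simp
    then show ?thesis using b by (simp add: inner_diff_right inner_commute)
  qed
  show c: "conjugate \<phi> v = ereal (inner p v - a)"
  proof (rule antisym)
    show "conjugate \<phi> v \<le> ereal (inner p v - a)" unfolding conjugate_def by (rule SUP_least) (use up in auto)
    show "ereal (inner p v - a) \<le> conjugate \<phi> v" using conj_ge[of p v \<phi>] a by simp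
  qed
  show "p \<in> subdiff (conjugate \<phi>) v"
    unfolding subdiff_def
  proof (intro CollectI conjI allI)
    show "conjugate \<phi> v \<noteq> \<infinity>" using c by simp
    fix w
    have "conjugate \<phi> v + ereal (inner p (w - v)) = ereal (inner p w) - \<phi> p"
      using c a by (simp add: inner_diff_right)
    also have "\<dots> \<le> conjugate \<phi> w" by (rule conj_ge)
    finally show "conjugate \<phi> v + ereal (inner p (w - v)) \<le> conjugate \<phi> w" .
  qed
qed


lemma prox_exists:
  fixes \<phi> :: "'a::euclidean_space \<Rightarrow> ereal"
  assumes pcc: "pcc \<phi>" and t: "t > 0" and minor: "\<And>y. ereal (inner c y + \<beta>) \<le> \<phi> y"
  shows "\<exists>p. (1 / t) *\<^sub>R (z - p) \<in> subdiff \<phi> p"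
proof -
  have nm: "\<And>x. \<phi> x \<noteq> -\<infinity>" and "\<exists>x. \<phi> x \<noteq> \<infinity>" and cv: "convex_fun \<phi>" and cl: "closed (epigraph \<phi>)"
    using pcc by (auto simp: pcc_def proper_fun_def closed_fun_def)
  then obtain y0 where y0: "\<phi> y0 \<noteq> \<infinity>" by blast
  define F where "F = (\<lambda>y. ereal t * \<phi> y + ereal ((norm (y - z))\<^sup>2 / 2))"
  define m0 where "m0 = t * \<beta> + t * inner c z - t\<^sup>2 * (norm c)\<^sup>2 / 2"
  have lower: "ereal (m0 + (norm (y - z + t *\<^sub>R c))\<^sup>2 / 2) \<le> F y" for y
  proof (cases "\<phi> y = \<infinity>")
    case True then show ?thesis using t by (simp add: F_def)
  next
    case False
    then obtain b where b: "\<phi> y = ereal b" using nm[of y] by (cases "\<phi> y") auto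
    have "inner c y + \<beta> \<le> b" using minor[of y] b by simp
    then have "t * (inner c y + \<beta>) \<le> t * b" using t by (intro mult_left_mono) auto
    moreover have "(norm (y - z + t *\<^sub>R c))\<^sup>2 = (norm (y - z))\<^sup>2 + 2 * t * inner c y - 2 * t * inner c z + t\<^sup>2 * (norm c)\<^sup>2"
      by (simp add: power2_norm_eq_inner inner_add_left inner_add_right inner_diff_left inner_diff_right inner_commute algebra_simps) (simp add: power2_eq_square)
    ultimately show ?thesis using b unfolding F_def m0_def by (simp add: field_simps)
  qed
  define m where "m = (INF y. F y)"
  have m_ge: "ereal m0 \<le> m" unfolding m_def
  proof (rule INF_greatest)
    fix y show "ereal m0 \<le> F y" using lower[of y] by (rule order_trans[rotated]) simp
  qed
  have "m \<le> F y0" unfolding m_def by (rule INF_lower) simp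
  moreover have "F y0 \<noteq> \<infinity>" using y0 nm[of y0] unfolding F_def by (cases "\<phi> y0") auto
  ultimately obtain mr where mr: "m = ereal mr" using m_ge by (cases m) auto
  have mlow: "ereal mr \<le> F y" for y using mr unfolding m_def by (metis INF_lower UNIV_I)
  have "\<exists>y. F y < ereal (mr + inverse (real (Suc n)))" for n
  proof -
    have "m < ereal (mr + inverse (real (Suc n)))" using mr by simp
    then show ?thesis unfolding m_def by (simp add: INF_less_iff)
  qed
  then obtain ys where ys: "\<And>n. F (ys n) < ereal (mr + inverse (real (Suc n)))" by metis
  have fin: "\<phi> (ys n) \<noteq> \<infinity>" for n
  proof
    assume "\<phi> (ys n) = \<infinity>" then show False using ys[of n] t by (simp add: F_def)
  qed
  define av where "av = (\<lambda>n. real_of_ereal (\<phi> (ys n)))"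
  have av: "\<phi> (ys n) = ereal (av n)" for n using fin[of n] nm[of "ys n"] unfolding av_def by (cases "\<phi> (ys n)") auto
  have avl: "t * av n + (norm (ys n - z))\<^sup>2 / 2 < mr + inverse (real (Suc n))" for n
    using ys[of n] av[of n] by (simp add: F_def)
  define R where "R = sqrt (2 * (mr + 1 - m0))"
  have bnd: "ys n \<in> cball (z - t *\<^sub>R c) R" for n
  proof -
    have "ereal (m0 + (norm (ys n - z + t *\<^sub>R c))\<^sup>2 / 2) < ereal (mr + inverse (real (Suc n)))"
      using lower[of "ys n"] ys[of n] by (rule le_less_trans)
    then have "m0 + (norm (ys n - z + t *\<^sub>R c))\<^sup>2 / 2 < mr + inverse (real (Suc n))" by simp
    moreover have "inverse (real (Suc n)) \<le> 1" by (simp add: field_simps)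
    ultimately have "(norm (ys n - z + t *\<^sub>R c))\<^sup>2 \<le> 2 * (mr + 1 - m0)" by simp
    then have "norm (ys n - z + t *\<^sub>R c) \<le> R" unfolding R_def by (simp add: real_le_rsqrt)
    moreover have "ys n - z + t *\<^sub>R c = ys n - (z - t *\<^sub>R c)" by (simp add: algebra_simps)
    ultimately show ?thesis by (simp add: dist_norm norm_minus_commute)
  qed
  obtain l r where r: "strict_mono r" and lim: "(ys \<circ> r) \<longlonglongrightarrow> l"
    using compact_imp_seq_compact[OF compact_cball, of "z - t *\<^sub>R c" R] bnd
    by (metis seq_compactE)
  define bv where "bv = (\<lambda>n. (mr + inverse (real (Suc n)) - (norm (ys n - z))\<^sup>2 / 2) / t)"
  define bl where "bl = (mr - (norm (l - z))\<^sup>2 / 2) / t"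
  have inE: "(ys (r n), bv (r n)) \<in> epigraph \<phi>" for n
  proof -
    have "t * av (r n) < mr + inverse (real (Suc (r n))) - (norm (ys (r n) - z))\<^sup>2 / 2"
      using avl[of "r n"] by linarith
    then have "av (r n) \<le> bv (r n)" unfolding bv_def using t by (simp add: pos_less_divide_eq pos_le_divide_eq mult.commute)
    then show ?thesis using av[of "r n"] by (simp add: epigraph_def)
  qed
  have lim1: "(\<lambda>n. ys (r n)) \<longlonglongrightarrow> l" using lim by (simp add: comp_def)
  have lim2: "(\<lambda>n. inverse (real (Suc (r n)))) \<longlonglongrightarrow> 0"
    using LIMSEQ_subseq_LIMSEQ[OF LIMSEQ_inverse_real_of_nat r] by (simp add: comp_def)
  have lim2': "(\<lambda>n. mr + inverse (real (Suc (r n)))) \<longlonglongrightarrow> mr + 0"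
    by (intro tendsto_add tendsto_const lim2)
  have lim3: "(\<lambda>n. bv (r n)) \<longlonglongrightarrow> bl" unfolding bv_def bl_def
    using t lim2' by (auto intro!: tendsto_intros lim1)
  have "(l, bl) \<in> epigraph \<phi>"
    using closed_sequentially[OF cl, of "\<lambda>n. (ys (r n), bv (r n))"] inE tendsto_Pair[OF lim1 lim3] by blast
  then have pl: "\<phi> l \<le> ereal bl" by (simp add: epigraph_def)
  then obtain al where al: "\<phi> l = ereal al" using nm[of l] by (cases "\<phi> l") auto
  have "al \<le> bl" using pl al by simp
  then have alm: "t * al + (norm (l - z))\<^sup>2 / 2 \<le> mr" using t unfolding bl_def by (simp add: field_simps)
  have "(1 / t) *\<^sub>R (z - l) \<in> subdiff \<phi> l"
    unfolding subdiff_def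
  proof (intro CollectI conjI allI)
    show "\<phi> l \<noteq> \<infinity>" using al by simp
    fix y
    show "\<phi> l + ereal (inner ((1 / t) *\<^sub>R (z - l)) (y - l)) \<le> \<phi> y"
    proof (cases "\<phi> y = \<infinity>")
      case True then show ?thesis using al by simp
    next
      case False
      then obtain b where b: "\<phi> y = ereal b" using nm[of y] by (cases "\<phi> y") auto
      have key: "0 \<le> t * (b - al) + inner (l - z) (y - l) + s * ((norm (y - l))\<^sup>2 / 2)" if s: "0 < s" "s \<le> 1" for s
      proof -
        define ws where "ws = (1 - s) *\<^sub>R l + s *\<^sub>R y"
        have c1: "\<phi> ws \<le> ereal ((1 - s) * al + s * b)" unfolding ws_def
          by (rule cf_ineq[OF cv al b]) (use s in auto)
        then obtain w where w: "\<phi> ws = ereal w" using nm[of ws] by (cases "\<phi> ws") auto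
        have wle: "w \<le> (1 - s) * al + s * b" using c1 w by simp
        have "ereal mr \<le> F ws" by (rule mlow)
        then have "mr \<le> t * w + (norm (ws - z))\<^sup>2 / 2" using w by (simp add: F_def)
        moreover have "t * w \<le> t * ((1 - s) * al + s * b)" using wle t by (intro mult_left_mono) auto
        moreover have weq: "ws - z = (l - z) + s *\<^sub>R (y - l)" unfolding ws_def by (simp add: algebra_simps)
        have "(norm (ws - z))\<^sup>2 = (norm (l - z))\<^sup>2 + 2 * s * inner (l - z) (y - l) + s\<^sup>2 * (norm (y - l))\<^sup>2"
          unfolding weq
          by (simp only: power2_norm_eq_inner inner_add_left inner_add_right inner_scaleR_left inner_scaleR_right inner_commute[of "y - l" "l - z"]) (simp add: algebra_simps power2_eq_square)
        ultimately have "0 \<le> s * (t * (b - al) + inner (l - z) (y - l) + s * ((norm (y - l))\<^sup>2 / 2))"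
          using alm by (simp add: field_simps power2_eq_square)
        then show ?thesis using s by (simp add: zero_le_mult_iff)
      qed
      have "0 \<le> t * (b - al) + inner (l - z) (y - l)"
        by (rule limit_s[where B = "(norm (y - l))\<^sup>2 / 2"]) (use key in auto)
      then have "al + (1 / t) * inner (z - l) (y - l) \<le> b"
        using t by (simp add: field_simps inner_diff_left)
      then show ?thesis using al b by simp
    qed
  qed
  then show ?thesis by blast
qed

lemma two_le: "(P::real) \<le> Q \<Longrightarrow> 2 * (P - Q) \<le> 0" by simp

lemma one_step_scalar:
  fixes \<gamma> \<Omega> \<mu> \<nu> \<tau> K \<rho> c X A B Bab E Eea Eeb D Dda :: real
  assumes g: "\<gamma> > 0" and O: "\<Omega> \<ge> 1" and mu: "\<mu> \<ge> 0" and nu: "\<nu> \<ge> 0"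
    and t: "\<tau> = \<gamma> * \<Omega>" and K: "K = \<Omega> * (\<tau> + 2 * \<mu>)"
    and hG: "Dda - \<gamma> * Eea - A \<ge> \<gamma> * \<nu> * A"
    and hH: "Eeb + (Bab - B) / \<tau> \<ge> \<mu> * (E + 2 * (Eea - Eeb) / \<tau> + (A - 2 * Bab + B) / \<tau>\<^sup>2)"
    and am: "D - 2 * (1 + \<gamma> * \<nu>) * Dda + (1 + \<gamma> * \<nu>)\<^sup>2 * A \<ge> 0"
    and hF: "D \<le> \<rho> * X" "\<rho> \<le> c * (1 + \<gamma> * \<nu>)" "1 - 2 * \<mu> / K \<le> c" "X \<ge> 0" "E \<ge> 0" "A \<ge> 0"
  shows "(1 / \<gamma>) * (A - 2 * (A - Bab) / \<Omega> + (A - 2 * Bab + B) / \<Omega>\<^sup>2 + (\<Omega> - 1) * (A - 2 * Bab + B) / \<Omega>\<^sup>2)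
       + K * (E + 2 * (Eea - Eeb) / (\<tau> * \<Omega>) + (A - 2 * Bab + B) / (\<tau> * \<Omega>)\<^sup>2 + (\<Omega> - 1) * (A - 2 * Bab + B) / (\<tau> * \<Omega>)\<^sup>2)
      \<le> c * ((1 / \<gamma>) * X + K * E)"
proof -
  have Op: "\<Omega> > 0" using O by simp
  have tp: "\<tau> > 0" using g Op t by simp
  have Kp: "K > 0" using Op tp mu K by (simp add: add_pos_nonneg)
  have gn: "1 + \<gamma> * \<nu> > 0" using g nu by (simp add: add_pos_nonneg)
  have id: "(1 / \<gamma>) * (A - 2 * (A - Bab) / \<Omega> + (A - 2 * Bab + B) / \<Omega>\<^sup>2 + (\<Omega> - 1) * (A - 2 * Bab + B) / \<Omega>\<^sup>2)
       + K * (E + 2 * (Eea - Eeb) / (\<tau> * \<Omega>) + (A - 2 * Bab + B) / (\<tau> * \<Omega>)\<^sup>2 + (\<Omega> - 1) * (A - 2 * Bab + B) / (\<tau> * \<Omega>)\<^sup>2)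
      = (1 / \<gamma>) * A + 2 * Eea + (K - 2 * \<mu>) * E
        + 2 * (\<mu> * (E + 2 * (Eea - Eeb) / \<tau> + (A - 2 * Bab + B) / \<tau>\<^sup>2) - (Eeb + (Bab - B) / \<tau>))"
    using g Op unfolding t K by (simp add: field_simps power2_eq_square power4_eq_xxxx)
  have s2: "2 * (\<mu> * (E + 2 * (Eea - Eeb) / \<tau> + (A - 2 * Bab + B) / \<tau>\<^sup>2) - (Eeb + (Bab - B) / \<tau>)) \<le> 0"
    by (rule two_le[OF hH])
  have s3a: "(1 + \<gamma> * \<nu>)\<^sup>2 * A + 2 * (1 + \<gamma> * \<nu>) * \<gamma> * Eea \<le> D"
  proof -
    have "2 * (1 + \<gamma> * \<nu>) * ((1 + \<gamma> * \<nu>) * A + \<gamma> * Eea) \<le> 2 * (1 + \<gamma> * \<nu>) * Dda"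
      using hG gn by (intro mult_left_mono) (auto simp: algebra_simps)
    then show ?thesis using am by (simp add: algebra_simps power2_eq_square)
  qed
  have s3: "(1 / \<gamma>) * A + 2 * Eea \<le> D / (\<gamma> * (1 + \<gamma> * \<nu>))"
  proof -
    have "(1 + \<gamma> * \<nu>) * A + 2 * \<gamma> * Eea \<le> D / (1 + \<gamma> * \<nu>)"
      using s3a gn by (simp add: field_simps power2_eq_square)
    moreover have "A \<le> (1 + \<gamma> * \<nu>) * A" using g nu hF(6) by (simp add: algebra_simps)
    ultimately have "A + 2 * \<gamma> * Eea \<le> D / (1 + \<gamma> * \<nu>)" by linarith
    then have "(A + 2 * \<gamma> * Eea) / \<gamma> \<le> (D / (1 + \<gamma> * \<nu>)) / \<gamma>" using g by (intro divide_right_mono) auto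
    moreover have "(A + 2 * \<gamma> * Eea) / \<gamma> = (1 / \<gamma>) * A + 2 * Eea" using g by (simp add: field_simps)
    moreover have "(D / (1 + \<gamma> * \<nu>)) / \<gamma> = D / (\<gamma> * (1 + \<gamma> * \<nu>))" by (simp add: field_simps)
    ultimately show ?thesis by (simp add: mult.commute)
  qed
  have s4: "D / (\<gamma> * (1 + \<gamma> * \<nu>)) \<le> c * ((1 / \<gamma>) * X)"
  proof -
    have "D \<le> c * (1 + \<gamma> * \<nu>) * X" using hF(1) mult_right_mono[OF hF(2) hF(4)] by linarith
    then have "D / (1 + \<gamma> * \<nu>) \<le> c * X" using gn by (simp add: pos_divide_le_eq algebra_simps)
    then have "(D / (1 + \<gamma> * \<nu>)) / \<gamma> \<le> (c * X) / \<gamma>" using g by (intro divide_right_mono) auto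
    then show ?thesis by (simp add: mult.commute)
  qed
  have s5: "(K - 2 * \<mu>) * E \<le> c * (K * E)"
  proof -
    have "K - 2 * \<mu> \<le> c * K" using hF(3) Kp by (simp add: field_simps)
    then show ?thesis using hF(5) mult_right_mono by (metis mult.assoc)
  qed
  show ?thesis unfolding id using s2 s3 s4 s5 by (simp add: algebra_simps)
qed

lemma prox_sub:
  fixes \<phi> :: "'a::euclidean_space \<Rightarrow> ereal"
  assumes pcc: "pcc \<phi>" and t: "t > 0" and minor: "\<And>y. ereal (inner c y + \<beta>) \<le> \<phi> y"
  shows "(1 / t) *\<^sub>R (z - prox t \<phi> z) \<in> subdiff \<phi> (prox t \<phi> z)"
proof -
  have nm: "\<And>x. \<phi> x \<noteq> -\<infinity>" using pcc by (auto simp: pcc_def proper_fun_def)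
  obtain p where p: "(1 / t) *\<^sub>R (z - p) \<in> subdiff \<phi> p" using prox_exists[OF pcc t minor] by blast
  then have "prox t \<phi> z = p" by (rule prox_char[OF t nm])
  then show ?thesis using p by simp
qed

lemma subgrad_nonexp:
  assumes sc: "strongly_convex_fun \<nu> \<phi>" and nm: "\<And>x. \<phi> x \<noteq> -\<infinity>" and t: "t > 0"
    and s1: "(1 / t) *\<^sub>R (z1 - p1) \<in> subdiff \<phi> p1" and s2: "(1 / t) *\<^sub>R (z2 - p2) \<in> subdiff \<phi> p2"
  shows "norm (p1 - p2) \<le> norm (z1 - z2)"
proof -
  have nu: "\<nu> \<ge> 0" using sc by (simp add: strongly_convex_fun_def)
  have "inner ((1 / t) *\<^sub>R (z1 - p1) - (1 / t) *\<^sub>R (z2 - p2)) (p1 - p2) \<ge> \<nu> * (norm (p1 - p2))\<^sup>2"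
    by (rule sc_mono[OF sc nm s1 s2])
  moreover have "\<nu> * (norm (p1 - p2))\<^sup>2 \<ge> 0" using nu by simp
  ultimately have "inner ((1 / t) *\<^sub>R ((z1 - z2) - (p1 - p2))) (p1 - p2) \<ge> 0"
    by (simp add: algebra_simps)
  then have "(1 / t) * (inner (z1 - z2) (p1 - p2) - inner (p1 - p2) (p1 - p2)) \<ge> 0"
    by (simp add: inner_diff_left)
  then have "inner (p1 - p2) (p1 - p2) \<le> inner (z1 - z2) (p1 - p2)" using t by (simp add: zero_le_divide_iff)
  also have "\<dots> \<le> norm (z1 - z2) * norm (p1 - p2)" by (rule norm_cauchy_schwarz)
  finally have "(norm (p1 - p2))\<^sup>2 \<le> norm (z1 - z2) * norm (p1 - p2)" by (simp add: power2_norm_eq_inner)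
  then show ?thesis by (cases "norm (p1 - p2) = 0") (auto simp: power2_eq_square)
qed

lemma sc0: "convex_fun \<phi> \<Longrightarrow> strongly_convex_fun 0 \<phi>"
  by (simp add: strongly_convex_fun_def)

lemma nsq1:
  fixes a b :: "'a::real_inner"
  assumes "\<Omega> > 0"
  shows "(norm (a - (1 / \<Omega>) *\<^sub>R (a - b)))\<^sup>2 = inner a a - 2 * (inner a a - inner a b) / \<Omega> + (inner a a - 2 * inner a b + inner b b) / \<Omega>\<^sup>2"
  using assms unfolding power2_norm_eq_inner by (simp add: inner_diff_left inner_diff_right inner_commute) (simp add: field_simps power2_eq_square)

lemma nsq2:
  fixes a b e :: "'a::real_inner"
  assumes "s > 0"
  shows "(norm (e + (1 / s) *\<^sub>R (a - b)))\<^sup>2 = inner e e + 2 * (inner e a - inner e b) / s + (inner a a - 2 * inner a b + inner b b) / s\<^sup>2"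
  using assms unfolding power2_norm_eq_inner by (simp add: inner_add_left inner_add_right inner_diff_left inner_diff_right inner_commute) (simp add: field_simps power2_eq_square)

lemma nsq3:
  fixes a b :: "'a::real_inner"
  shows "(norm (a - b))\<^sup>2 = inner a a - 2 * inner a b + inner b b"
  by (simp add: power2_norm_eq_inner inner_diff_left inner_diff_right inner_commute)


locale dys =
  fixes f :: "'a::euclidean_space \<Rightarrow> real" and gradf :: "'a \<Rightarrow> 'a"
    and g h :: "'a \<Rightarrow> ereal" and Lf muf mug muh \<gamma> om :: real and xk uk :: 'a
  assumes f_grad: "\<And>y. (f has_derivative (\<lambda>v. inner (gradf y) v)) (at y)"
    and f_smooth: "\<And>y z. norm (gradf y - gradf z) \<le> Lf * norm (y - z)"
    and g_pcc: "pcc g" and h_pcc: "pcc h"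
    and f_sc: "muf \<ge> 0" "convex_on UNIV (\<lambda>y. f y - muf / 2 * (norm y)\<^sup>2)"
    and g_sc: "strongly_convex_fun mug g"
    and h_sc: "strongly_convex_fun muh (conjugate h)"
    and muh_pos: "muh > 0" and gam: "\<gamma> > 0" and om: "om \<ge> 0"
    and kg: "- gradf xk - uk \<in> subdiff g xk" and kh: "xk \<in> subdiff (conjugate h) uk"
begin

lemma g_nm: "g x \<noteq> -\<infinity>" using g_pcc by (auto simp: pcc_def proper_fun_def)
lemma h_nm: "h x \<noteq> -\<infinity>" using h_pcc by (auto simp: pcc_def proper_fun_def)
lemma hc_nm: "conjugate h x \<noteq> -\<infinity>"
proof -
  obtain y where y: "h y \<noteq> \<infinity>" using h_pcc by (auto simp: pcc_def proper_fun_def)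
  then obtain b where "h y = ereal b" using h_nm[of y] by (cases "h y") auto
  then have "ereal (inner y x - b) \<le> conjugate h x" using conj_ge[of y x h] by simp
  then show ?thesis by auto
qed

lemma g_minor: "\<exists>c \<beta>. \<forall>y. ereal (inner c y + \<beta>) \<le> g y"
proof -
  obtain a where a: "g xk = ereal a" using kg g_nm[of xk] by (cases "g xk") (auto simp: subdiff_def)
  have "ereal (inner (- gradf xk - uk) y + (a - inner (- gradf xk - uk) xk)) \<le> g y" for y
  proof -
    have "g xk + ereal (inner (- gradf xk - uk) (y - xk)) \<le> g y" using kg by (auto simp: subdiff_def)
    then show ?thesis using a by (simp add: inner_diff_right algebra_simps)
  qed
  then show ?thesis by blast
qed

lemma h_minor: "\<exists>c \<beta>. \<forall>y. ereal (inner c y + \<beta>) \<le> h y"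
proof -
  obtain a where a: "conjugate h uk = ereal a" using kh hc_nm[of uk] by (cases "conjugate h uk") (auto simp: subdiff_def)
  have "ereal (inner uk y + (- a)) \<le> h y" for y
  proof (cases "h y")
    case (real r)
    then have "ereal (inner y uk) - ereal r \<le> ereal a" using conj_ge[of y uk h] a by simp
    then show ?thesis using real by (simp add: inner_commute)
  qed (use h_nm in auto)
  then show ?thesis by blast
qed

lemma g_prox: "t > 0 \<Longrightarrow> (1 / t) *\<^sub>R (z - prox t g z) \<in> subdiff g (prox t g z)"
  using g_minor prox_sub[OF g_pcc] by blast

lemma h_prox: "t > 0 \<Longrightarrow> (1 / t) *\<^sub>R (z - prox t h z) \<in> subdiff h (prox t h z)"
  using h_minor prox_sub[OF h_pcc] by blast

lemma h_sc0: "strongly_convex_fun 0 h" using h_pcc by (intro sc0) (simp add: pcc_def)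

lemma h_sub_conj: "v \<in> subdiff h p \<Longrightarrow> p \<in> subdiff (conjugate h) v"
proof -
  assume v: "v \<in> subdiff h p"
  then obtain a where "h p = ereal a" using h_nm[of p] by (cases "h p") (auto simp: subdiff_def)
  then show ?thesis using subgrad_conj(2)[OF h_nm v] by blast
qed

lemma uk_sub: "uk \<in> subdiff h xk"
proof -
  define p where "p = prox 1 h (xk + uk)"
  have s: "(1 / 1) *\<^sub>R ((xk + uk) - p) \<in> subdiff h p" unfolding p_def by (rule h_prox) simp
  then have s': "xk + uk - p \<in> subdiff h p" by simp
  have "p \<in> subdiff (conjugate h) (xk + uk - p)" by (rule h_sub_conj[OF s'])
  from sc_mono[OF h_sc hc_nm this kh]
  have "inner (p - xk) (xk + uk - p - uk) \<ge> muh * (norm (xk + uk - p - uk))\<^sup>2" .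
  moreover have "muh * (norm (xk + uk - p - uk))\<^sup>2 \<ge> 0" using muh_pos by simp
  ultimately have "inner (p - xk) (xk - p) \<ge> 0" by simp
  then have "inner (p - xk) (p - xk) \<le> 0" by (simp add: inner_diff_right inner_diff_left inner_commute)
  then have "p = xk" by (metis inner_gt_zero_iff eq_iff_diff_eq_0 not_le)
  then show ?thesis using s' by simp
qed

lemma xh_sub: "(1 / \<gamma>) *\<^sub>R ((x - \<gamma> *\<^sub>R gradf x - \<gamma> *\<^sub>R u) - dy_xhat \<gamma> gradf g x u) \<in> subdiff g (dy_xhat \<gamma> gradf g x u)"
  unfolding dy_xhat_def by (rule g_prox[OF gam])

lemma xh_fix: "dy_xhat \<gamma> gradf g xk uk = xk"
  unfolding dy_xhat_def
proof (rule prox_char[OF gam g_nm])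
  have "(1 / \<gamma>) *\<^sub>R (xk - \<gamma> *\<^sub>R gradf xk - \<gamma> *\<^sub>R uk - xk) = - gradf xk - uk"
    using gam by (simp add: algebra_simps)
  then show "(1 / \<gamma>) *\<^sub>R (xk - \<gamma> *\<^sub>R gradf xk - \<gamma> *\<^sub>R uk - xk) \<in> subdiff g xk" using kg by simp
qed

lemma tau_pos: "\<gamma> * (1 + om) > 0" using gam om by simp

lemma res_fix: "dy_res \<gamma> om h xk uk = 0"
proof -
  have "prox (\<gamma> * (1 + om)) h (xk + (\<gamma> * (1 + om)) *\<^sub>R uk) = xk"
  proof (rule prox_char[OF tau_pos h_nm])
    have "(1 / (\<gamma> * (1 + om))) *\<^sub>R (xk + (\<gamma> * (1 + om)) *\<^sub>R uk - xk) = uk"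
      using gam om by simp
    then show "(1 / (\<gamma> * (1 + om))) *\<^sub>R (xk + (\<gamma> * (1 + om)) *\<^sub>R uk - xk) \<in> subdiff h xk" using uk_sub by simp
  qed
  then show ?thesis unfolding dy_res_def by simp
qed

lemma prox_h_sub: "(1 / (\<gamma> * (1 + om))) *\<^sub>R ((xh + (\<gamma> * (1 + om)) *\<^sub>R u) - (xh - dy_res \<gamma> om h xh u))
     \<in> subdiff h (xh - dy_res \<gamma> om h xh u)"
  unfolding dy_res_def using h_prox[OF tau_pos] by simp

lemma prox_g_nonexp: "t > 0 \<Longrightarrow> norm (prox t g z1 - prox t g z2) \<le> norm (z1 - z2)"
  by (rule subgrad_nonexp[OF g_sc g_nm _ g_prox g_prox])

lemma prox_h_nonexp: "t > 0 \<Longrightarrow> norm (prox t h z1 - prox t h z2) \<le> norm (z1 - z2)"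
  by (rule subgrad_nonexp[OF h_sc0 h_nm _ h_prox h_prox])

lemma Lf_nonneg: "Lf \<ge> 0" by (rule mu_le_L(2)[OF f_grad f_smooth f_sc(2)])

lemma xh_lip: "norm (dy_xhat \<gamma> gradf g x u - dy_xhat \<gamma> gradf g x' u') \<le> (1 + \<gamma> * Lf) * norm (x - x') + \<gamma> * norm (u - u')"
proof -
  have "norm (dy_xhat \<gamma> gradf g x u - dy_xhat \<gamma> gradf g x' u') \<le>
        norm ((x - \<gamma> *\<^sub>R gradf x - \<gamma> *\<^sub>R u) - (x' - \<gamma> *\<^sub>R gradf x' - \<gamma> *\<^sub>R u'))"
    unfolding dy_xhat_def by (rule prox_g_nonexp[OF gam])
  also have "(x - \<gamma> *\<^sub>R gradf x - \<gamma> *\<^sub>R u) - (x' - \<gamma> *\<^sub>R gradf x' - \<gamma> *\<^sub>R u') = (x - x') - \<gamma> *\<^sub>R (gradf x - gradf x') - \<gamma> *\<^sub>R (u - u')"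
    by (simp add: algebra_simps)
  also have "norm \<dots> \<le> norm (x - x') + norm (\<gamma> *\<^sub>R (gradf x - gradf x')) + norm (\<gamma> *\<^sub>R (u - u'))"
    using norm_triangle_ineq4[of "(x - x') - \<gamma> *\<^sub>R (gradf x - gradf x')" "\<gamma> *\<^sub>R (u - u')"]
      norm_triangle_ineq4[of "x - x'" "\<gamma> *\<^sub>R (gradf x - gradf x')"] by linarith
  also have "\<dots> \<le> norm (x - x') + \<gamma> * (Lf * norm (x - x')) + \<gamma> * norm (u - u')"
    using gam f_smooth[of x x'] by (simp add: mult_left_mono)
  finally show ?thesis by (simp add: algebra_simps)
qed

lemma res_lip: "norm (dy_res \<gamma> om h z u - dy_res \<gamma> om h z' u') \<le> 2 * norm (z - z') + \<gamma> * (1 + om) * norm (u - u')"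
proof -
  let ?t = "\<gamma> * (1 + om)"
  have "norm (prox ?t h (z + ?t *\<^sub>R u) - prox ?t h (z' + ?t *\<^sub>R u')) \<le> norm ((z + ?t *\<^sub>R u) - (z' + ?t *\<^sub>R u'))"
    by (rule prox_h_nonexp[OF tau_pos])
  also have "(z + ?t *\<^sub>R u) - (z' + ?t *\<^sub>R u') = (z - z') + ?t *\<^sub>R (u - u')" by (simp add: algebra_simps)
  also have "norm \<dots> \<le> norm (z - z') + norm (?t *\<^sub>R (u - u'))" by (rule norm_triangle_ineq)
  also have "norm (?t *\<^sub>R (u - u')) = ?t * norm (u - u')" using tau_pos by simp
  finally have *: "norm (prox ?t h (z + ?t *\<^sub>R u) - prox ?t h (z' + ?t *\<^sub>R u')) \<le> norm (z - z') + ?t * norm (u - u')" .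
  have "dy_res \<gamma> om h z u - dy_res \<gamma> om h z' u' = (z - z') - (prox ?t h (z + ?t *\<^sub>R u) - prox ?t h (z' + ?t *\<^sub>R u'))"
    unfolding dy_res_def by (simp add: algebra_simps)
  then have "norm (dy_res \<gamma> om h z u - dy_res \<gamma> om h z' u') \<le> norm (z - z') + norm (prox ?t h (z + ?t *\<^sub>R u) - prox ?t h (z' + ?t *\<^sub>R u'))"
    by (simp add: norm_triangle_ineq4)
  then show ?thesis using * by simp
qed


definition "cc = max ((1 - \<gamma> * muf)\<^sup>2 / (1 + \<gamma> * mug))
                 (max ((\<gamma> * Lf - 1)\<^sup>2 / (1 + \<gamma> * mug))
                      (1 - (2 / \<gamma> * muh) / ((1 + om) * (1 + om + 2 / \<gamma> * muh))))"

definition "KK = (1 + om) * (\<gamma> * (1 + om) + 2 * muh)"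

lemma mug_nonneg: "mug \<ge> 0" using g_sc by (simp add: strongly_convex_fun_def)

lemma det_step:
  fixes x u :: 'a
  defines "xh \<equiv> dy_xhat \<gamma> gradf g x u"
  defines "r \<equiv> dy_res \<gamma> om h xh u"
  shows "(1 / \<gamma>) * ((norm (xh - (1 / (1 + om)) *\<^sub>R r - xk))\<^sup>2 + om * (norm r)\<^sup>2 / (1 + om)\<^sup>2)
       + KK * ((norm (u + (1 / (\<gamma> * (1 + om)\<^sup>2)) *\<^sub>R r - uk))\<^sup>2 + om * (norm r)\<^sup>2 / (\<gamma> * (1 + om) * (1 + om))\<^sup>2)
       \<le> cc * dy_lyap \<gamma> om muh xk uk x u"
proof -
  define \<Omega> where "\<Omega> = 1 + om"
  define \<tau> where "\<tau> = \<gamma> * \<Omega>"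
  define p where "p = xh - r"
  define a where "a = xh - xk"
  define b where "b = p - xk"
  define e where "e = u - uk"
  define \<delta> where "\<delta> = (x - \<gamma> *\<^sub>R gradf x) - (xk - \<gamma> *\<^sub>R gradf xk)"
  define \<rho> where "\<rho> = max ((1 - \<gamma> * muf)\<^sup>2) ((\<gamma> * Lf - 1)\<^sup>2)"
  have O1: "\<Omega> \<ge> 1" using om by (simp add: \<Omega>_def)
  have Op: "\<Omega> > 0" using O1 by simp
  have tp: "\<tau> > 0" using gam Op by (simp add: \<tau>_def)
  have rab: "r = a - b" unfolding a_def b_def p_def by simp
  have nu: "mug \<ge> 0" by (rule mug_nonneg)
  have hG: "inner \<delta> a - \<gamma> * inner e a - inner a a \<ge> \<gamma> * mug * inner a a"
  proof -
    have m: "inner ((1 / \<gamma>) *\<^sub>R ((x - \<gamma> *\<^sub>R gradf x - \<gamma> *\<^sub>R u) - xh) - (- gradf xk - uk)) (xh - xk) \<ge> mug * (norm (xh - xk))\<^sup>2"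
      unfolding xh_def by (rule sc_mono[OF g_sc g_nm xh_sub kg])
    have "(1 / \<gamma>) *\<^sub>R ((x - \<gamma> *\<^sub>R gradf x - \<gamma> *\<^sub>R u) - xh) - (- gradf xk - uk) = (1 / \<gamma>) *\<^sub>R (\<delta> - \<gamma> *\<^sub>R e - a)"
      unfolding \<delta>_def e_def a_def using gam by (simp add: algebra_simps)
    then have "(1 / \<gamma>) * (inner \<delta> a - \<gamma> * inner e a - inner a a) \<ge> mug * inner a a"
      using m unfolding a_def[symmetric] by (simp add: power2_norm_eq_inner inner_diff_left)
    then show ?thesis using gam by (simp add: field_simps)
  qed
  have hH: "inner e b + (inner a b - inner b b) / \<tau> \<ge> muh * (inner e e + 2 * (inner e a - inner e b) / \<tau> + (inner a a - 2 * inner a b + inner b b) / \<tau>\<^sup>2)"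
  proof -
    have ps: "(1 / \<tau>) *\<^sub>R ((xh + \<tau> *\<^sub>R u) - p) \<in> subdiff h p"
      unfolding p_def r_def \<tau>_def \<Omega>_def by (rule prox_h_sub)
    have m: "inner (p - xk) ((1 / \<tau>) *\<^sub>R ((xh + \<tau> *\<^sub>R u) - p) - uk) \<ge> muh * (norm ((1 / \<tau>) *\<^sub>R ((xh + \<tau> *\<^sub>R u) - p) - uk))\<^sup>2"
      by (rule sc_mono[OF h_sc hc_nm h_sub_conj[OF ps] kh])
    have "(1 / \<tau>) *\<^sub>R ((xh + \<tau> *\<^sub>R u) - p) - uk = e + (1 / \<tau>) *\<^sub>R (a - b)"
      unfolding e_def a_def b_def using tp by (simp add: algebra_simps)
    then have m2: "inner b (e + (1 / \<tau>) *\<^sub>R (a - b)) \<ge> muh * (norm (e + (1 / \<tau>) *\<^sub>R (a - b)))\<^sup>2"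
      using m unfolding b_def by simp
    have "inner b (e + (1 / \<tau>) *\<^sub>R (a - b)) = inner e b + (inner a b - inner b b) / \<tau>"
      by (simp add: inner_add_right inner_diff_right inner_commute diff_divide_distrib)
    then show ?thesis using m2 unfolding nsq2[OF tp] by simp
  qed
  have am: "inner \<delta> \<delta> - 2 * (1 + \<gamma> * mug) * inner \<delta> a + (1 + \<gamma> * mug)\<^sup>2 * inner a a \<ge> 0"
  proof -
    have "0 \<le> inner (\<delta> - (1 + \<gamma> * mug) *\<^sub>R a) (\<delta> - (1 + \<gamma> * mug) *\<^sub>R a)" by simp
    also have "\<dots> = inner \<delta> \<delta> - 2 * (1 + \<gamma> * mug) * inner \<delta> a + (1 + \<gamma> * mug)\<^sup>2 * inner a a"
      by (simp add: inner_diff_left inner_diff_right inner_commute power2_eq_square algebra_simps)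
    finally show ?thesis .
  qed
  have hF1: "inner \<delta> \<delta> \<le> \<rho> * (norm (x - xk))\<^sup>2"
    using grad_step[OF f_grad f_smooth f_sc(1) f_sc(2), of \<gamma> x xk] gam
    unfolding \<delta>_def \<rho>_def by (simp add: power2_norm_eq_inner)
  have gn: "1 + \<gamma> * mug > 0" using gam nu by (simp add: add_pos_nonneg)
  have hF2: "\<rho> \<le> cc * (1 + \<gamma> * mug)"
  proof -
    have "(1 - \<gamma> * muf)\<^sup>2 / (1 + \<gamma> * mug) \<le> cc" "(\<gamma> * Lf - 1)\<^sup>2 / (1 + \<gamma> * mug) \<le> cc"
      unfolding cc_def by auto
    then have "(1 - \<gamma> * muf)\<^sup>2 \<le> cc * (1 + \<gamma> * mug)" "(\<gamma> * Lf - 1)\<^sup>2 \<le> cc * (1 + \<gamma> * mug)"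
      using gn by (simp_all add: pos_divide_le_eq)
    then show ?thesis unfolding \<rho>_def by simp
  qed
  have hF3: "1 - 2 * muh / (\<Omega> * (\<tau> + 2 * muh)) \<le> cc"
  proof -
    have le: "1 - (2 / \<gamma> * muh) / ((1 + om) * (1 + om + 2 / \<gamma> * muh)) \<le> cc" unfolding cc_def by auto
    have eq: "(2 / \<gamma> * muh) / ((1 + om) * (1 + om + 2 / \<gamma> * muh)) = 2 * muh / (\<Omega> * (\<tau> + 2 * muh))"
      unfolding \<Omega>_def \<tau>_def using gam om by (simp add: field_simps)
    show ?thesis using le unfolding eq .
  qed
  have main: "(1 / \<gamma>) * (inner a a - 2 * (inner a a - inner a b) / \<Omega> + (inner a a - 2 * inner a b + inner b b) / \<Omega>\<^sup>2 + (\<Omega> - 1) * (inner a a - 2 * inner a b + inner b b) / \<Omega>\<^sup>2)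
       + (\<Omega> * (\<tau> + 2 * muh)) * (inner e e + 2 * (inner e a - inner e b) / (\<tau> * \<Omega>) + (inner a a - 2 * inner a b + inner b b) / (\<tau> * \<Omega>)\<^sup>2 + (\<Omega> - 1) * (inner a a - 2 * inner a b + inner b b) / (\<tau> * \<Omega>)\<^sup>2)
      \<le> cc * ((1 / \<gamma>) * (norm (x - xk))\<^sup>2 + (\<Omega> * (\<tau> + 2 * muh)) * inner e e)"
    by (rule one_step_scalar[OF gam O1 less_imp_le[OF muh_pos] nu \<tau>_def refl hG hH am hF1 hF2 hF3]) auto
  have e1: "(norm (xh - (1 / (1 + om)) *\<^sub>R r - xk))\<^sup>2 = inner a a - 2 * (inner a a - inner a b) / \<Omega> + (inner a a - 2 * inner a b + inner b b) / \<Omega>\<^sup>2"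
  proof -
    have "xh - (1 / (1 + om)) *\<^sub>R r - xk = a - (1 / \<Omega>) *\<^sub>R (a - b)" unfolding rab a_def \<Omega>_def by simp
    then show ?thesis using nsq1[OF Op] by simp
  qed
  have e2: "(norm (u + (1 / (\<gamma> * (1 + om)\<^sup>2)) *\<^sub>R r - uk))\<^sup>2 = inner e e + 2 * (inner e a - inner e b) / (\<tau> * \<Omega>) + (inner a a - 2 * inner a b + inner b b) / (\<tau> * \<Omega>)\<^sup>2"
  proof -
    have "u + (1 / (\<gamma> * (1 + om)\<^sup>2)) *\<^sub>R r - uk = e + (1 / (\<tau> * \<Omega>)) *\<^sub>R (a - b)"
      unfolding rab e_def \<tau>_def \<Omega>_def by (simp add: power2_eq_square algebra_simps)
    then show ?thesis using nsq2[of "\<tau> * \<Omega>" e a b] tp Op by simp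
  qed
  have e3: "(norm r)\<^sup>2 = inner a a - 2 * inner a b + inner b b" unfolding rab by (rule nsq3)
  have e4: "dy_lyap \<gamma> om muh xk uk x u = (1 / \<gamma>) * (norm (x - xk))\<^sup>2 + (\<Omega> * (\<tau> + 2 * muh)) * inner e e"
    unfolding dy_lyap_def \<Omega>_def \<tau>_def e_def by (simp add: power2_norm_eq_inner)
  have e5: "KK = \<Omega> * (\<tau> + 2 * muh)" unfolding KK_def \<Omega>_def \<tau>_def by simp
  have e6: "\<gamma> * (1 + om) * (1 + om) = \<tau> * \<Omega>" unfolding \<tau>_def \<Omega>_def by simp
  have e7: "om * (inner a a - 2 * inner a b + inner b b) / (1 + om)\<^sup>2 = (\<Omega> - 1) * (inner a a - 2 * inner a b + inner b b) / \<Omega>\<^sup>2"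
    "om * (inner a a - 2 * inner a b + inner b b) / (\<tau> * \<Omega>)\<^sup>2 = (\<Omega> - 1) * (inner a a - 2 * inner a b + inner b b) / (\<tau> * \<Omega>)\<^sup>2"
    unfolding \<Omega>_def by simp_all
  show ?thesis unfolding e1 e2 e3 e4 e5 e6 e7 using main by simp
qed

end

context dys begin

lemma xs_eq:
  assumes xs_opt: "\<And>y. ereal (f xs) + g xs + h xs \<le> ereal (f y) + g y + h y"
    and mu_pos: "muf > 0 \<or> mug > 0"
  shows "xs = xk"
proof -
  obtain gk where gk: "g xk = ereal gk" using kg g_nm[of xk] by (cases "g xk") (auto simp: subdiff_def)
  obtain hk where hk: "h xk = ereal hk" using uk_sub h_nm[of xk] by (cases "h xk") (auto simp: subdiff_def)
  have le: "ereal (f xs) + g xs + h xs \<le> ereal (f xk + gk + hk)" using xs_opt[of xk] gk hk by simp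
  have "g xs \<noteq> \<infinity>" using le h_nm[of xs] by auto
  then obtain gs where gs: "g xs = ereal gs" using g_nm[of xs] by (cases "g xs") auto
  have "h xs \<noteq> \<infinity>" using le gs by auto
  then obtain hs where hs: "h xs = ereal hs" using h_nm[of xs] by (cases "h xs") auto
  have r0: "f xs + gs + hs \<le> f xk + gk + hk" using le gs hs by simp
  have r1: "f xs \<ge> f xk + inner (gradf xk) (xs - xk) + muf / 2 * (norm (xs - xk))\<^sup>2"
    by (rule strong_tangent[OF f_grad f_sc(2)])
  have "g xk + ereal (inner (- gradf xk - uk) (xs - xk) + mug / 2 * (norm (xs - xk))\<^sup>2) \<le> g xs"
    by (rule sc_subgrad[OF g_sc g_nm kg])
  then have r2: "gk + (inner (- gradf xk - uk) (xs - xk) + mug / 2 * (norm (xs - xk))\<^sup>2) \<le> gs" using gk gs by simp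
  have "h xk + ereal (inner uk (xs - xk) + 0 / 2 * (norm (xs - xk))\<^sup>2) \<le> h xs"
    by (rule sc_subgrad[OF h_sc0 h_nm uk_sub])
  then have r3: "hk + inner uk (xs - xk) \<le> hs" using hk hs by simp
  have "inner (- gradf xk - uk) (xs - xk) = - inner (gradf xk) (xs - xk) - inner uk (xs - xk)"
    by (simp add: inner_diff_left)
  then have "(muf + mug) / 2 * (norm (xs - xk))\<^sup>2 \<le> 0" using r0 r1 r2 r3 by (simp add: field_simps)
  moreover have "muf + mug > 0" using mu_pos f_sc(1) mug_nonneg by auto
  ultimately have "(norm (xs - xk))\<^sup>2 \<le> 0" by (simp add: mult_le_0_iff)
  then show ?thesis by simp
qed

lemma us_eq:
  assumes us_opt: "\<And>v. conjugate (\<lambda>y. ereal (f y) + g y) (- us) + conjugate h us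
                      \<le> conjugate (\<lambda>y. ereal (f y) + g y) (- v) + conjugate h v"
  shows "us = uk"
proof -
  define \<phi> where "\<phi> = (\<lambda>y. ereal (f y) + g y)"
  obtain gk where gk: "g xk = ereal gk" using kg g_nm[of xk] by (cases "g xk") (auto simp: subdiff_def)
  obtain hk where hk: "h xk = ereal hk" using uk_sub h_nm[of xk] by (cases "h xk") (auto simp: subdiff_def)
  have phi_nm: "\<phi> x \<noteq> -\<infinity>" for x using g_nm[of x] unfolding \<phi>_def by auto
  have phik: "\<phi> xk = ereal (f xk + gk)" unfolding \<phi>_def using gk by simp
  have sub: "- uk \<in> subdiff \<phi> xk"
    unfolding subdiff_def
  proof (intro CollectI conjI allI)
    show "\<phi> xk \<noteq> \<infinity>" using phik by simp
    fix y
    have t1: "f y \<ge> f xk + inner (gradf xk) (y - xk)"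
      using strong_tangent[OF f_grad f_sc(2), of xk y] f_sc(1) by (smt (verit) mult_nonneg_nonneg zero_le_power2 divide_nonneg_pos)
    have "g xk + ereal (inner (- gradf xk - uk) (y - xk) + mug / 2 * (norm (y - xk))\<^sup>2) \<le> g y"
      by (rule sc_subgrad[OF g_sc g_nm kg])
    moreover have "ereal (inner (- gradf xk - uk) (y - xk)) \<le> ereal (inner (- gradf xk - uk) (y - xk) + mug / 2 * (norm (y - xk))\<^sup>2)"
      using mug_nonneg by simp
    ultimately have t2: "g xk + ereal (inner (- gradf xk - uk) (y - xk)) \<le> g y"
      by (metis add_left_mono order_trans)
    show "\<phi> xk + ereal (inner (- uk) (y - xk)) \<le> \<phi> y"
    proof (cases "g y")
      case (real gy)
      then have "gk + inner (- gradf xk - uk) (y - xk) \<le> gy" using t2 gk by simp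
      then show ?thesis using t1 real phik unfolding \<phi>_def by (simp add: inner_diff_left)
    qed (use g_nm phik \<phi>_def in auto)
  qed
  have c1: "conjugate \<phi> (- uk) = ereal (inner xk (- uk) - (f xk + gk))"
    by (rule subgrad_conj(1)[OF phi_nm sub phik])
  have c2: "conjugate h uk = ereal (inner xk uk - hk)"
    by (rule subgrad_conj(1)[OF h_nm uk_sub hk])
  have le: "conjugate \<phi> (- us) + conjugate h us \<le> ereal (inner xk (- uk) - (f xk + gk) + (inner xk uk - hk))"
    using us_opt[of uk] c1 c2 unfolding \<phi>_def[symmetric] by simp
  have l1: "ereal (inner xk (- us) - (f xk + gk)) \<le> conjugate \<phi> (- us)"
    using conj_ge[of xk "- us" \<phi>] phik by simp
  have "conjugate h uk + ereal (inner xk (us - uk) + muh / 2 * (norm (us - uk))\<^sup>2) \<le> conjugate h us"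
    by (rule sc_subgrad[OF h_sc hc_nm kh])
  then have l2: "ereal (inner xk uk - hk + (inner xk (us - uk) + muh / 2 * (norm (us - uk))\<^sup>2)) \<le> conjugate h us"
    using c2 by simp
  have "conjugate \<phi> (- us) \<noteq> \<infinity>" using le l2 by auto
  then obtain A where A: "conjugate \<phi> (- us) = ereal A" using l1 by (cases "conjugate \<phi> (- us)") auto
  have "conjugate h us \<noteq> \<infinity>" using le A by auto
  then obtain B where B: "conjugate h us = ereal B" using l2 by (cases "conjugate h us") auto
  have "A + B \<le> inner xk (- uk) - (f xk + gk) + (inner xk uk - hk)" using le A B by simp
  moreover have "inner xk (- us) - (f xk + gk) \<le> A" using l1 A by simp
  moreover have "inner xk uk - hk + (inner xk (us - uk) + muh / 2 * (norm (us - uk))\<^sup>2) \<le> B" using l2 B by simp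
  ultimately have "muh / 2 * (norm (us - uk))\<^sup>2 \<le> 0" by (simp add: inner_diff_right)
  then have "(norm (us - uk))\<^sup>2 \<le> 0" using muh_pos by (simp add: mult_le_0_iff)
  then show ?thesis by simp
qed

lemma cc_lt1:
  assumes mu_pos: "muf > 0 \<or> mug > 0" and gL: "\<gamma> * Lf < 2"
  shows "cc < 1"
proof -
  have muL: "muf \<le> Lf" by (rule mu_le_L(1)[OF f_grad f_smooth f_sc(2)])
  have L0: "Lf \<ge> 0" by (rule Lf_nonneg)
  have gn: "1 + \<gamma> * mug \<ge> 1" using gam mug_nonneg by simp
  have q: "x\<^sup>2 / (1 + \<gamma> * mug) < 1" if "x\<^sup>2 < 1 \<or> (x\<^sup>2 = 1 \<and> mug > 0)" for x :: real
  proof -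
    have "\<gamma> * mug \<ge> 0" using gam mug_nonneg by simp
    then have "x\<^sup>2 < 1 + \<gamma> * mug" using that gam by (auto simp: add_pos_pos)
    then show ?thesis using gn by simp
  qed
  have t1: "(1 - \<gamma> * muf)\<^sup>2 / (1 + \<gamma> * mug) < 1"
  proof (rule q)
    show "(1 - \<gamma> * muf)\<^sup>2 < 1 \<or> ((1 - \<gamma> * muf)\<^sup>2 = 1 \<and> mug > 0)"
    proof (cases "muf > 0")
      case True
      have gm: "\<gamma> * muf \<le> \<gamma> * Lf" using muL gam by simp
      have "0 < \<gamma> * muf" using True gam by simp
      moreover have "\<gamma> * muf < 2" using gm gL by linarith
      ultimately have "\<bar>1 - \<gamma> * muf\<bar> < 1" by auto
      then have "(1 - \<gamma> * muf)\<^sup>2 < 1" by (metis abs_le_square_iff abs_one one_power2 abs_less_iff power2_abs abs_square_less_1)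
      then show ?thesis by simp
    next
      case False then show ?thesis using mu_pos f_sc(1) by auto
    qed
  qed
  have t2: "(\<gamma> * Lf - 1)\<^sup>2 / (1 + \<gamma> * mug) < 1"
  proof (rule q)
    show "(\<gamma> * Lf - 1)\<^sup>2 < 1 \<or> ((\<gamma> * Lf - 1)\<^sup>2 = 1 \<and> mug > 0)"
    proof (cases "Lf > 0")
      case True
      then have "0 < \<gamma> * Lf" using gam by simp
      then have "\<bar>\<gamma> * Lf - 1\<bar> < 1" using gL by auto
      then have "(\<gamma> * Lf - 1)\<^sup>2 < 1" by (simp add: abs_square_less_1)
      then show ?thesis by simp
    next
      case False
      then have "Lf = 0" using L0 by simp
      then have "muf = 0" using muL f_sc(1) by simp
      then show ?thesis using mu_pos \<open>Lf = 0\<close> by auto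
    qed
  qed
  have t3: "1 - (2 / \<gamma> * muh) / ((1 + om) * (1 + om + 2 / \<gamma> * muh)) < 1"
  proof -
    have "2 / \<gamma> * muh > 0" using gam muh_pos by simp
    moreover have "(1 + om) * (1 + om + 2 / \<gamma> * muh) > 0" using om gam muh_pos by (simp add: add_pos_pos)
    ultimately have "(2 / \<gamma> * muh) / ((1 + om) * (1 + om + 2 / \<gamma> * muh)) > 0" by (rule divide_pos_pos)
    then show ?thesis by linarith
  qed
  show ?thesis unfolding cc_def using t1 t2 t3 by simp
qed

lemma cc_nonneg: "cc \<ge> 0"
proof -
  have "1 + \<gamma> * mug > 0" using gam mug_nonneg by (simp add: add_pos_nonneg)
  then have "(1 - \<gamma> * muf)\<^sup>2 / (1 + \<gamma> * mug) \<ge> 0" by simp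
  then show ?thesis unfolding cc_def by linarith
qed

end

lemma prod_bound: "\<bar>(a::real) * b\<bar> \<le> a\<^sup>2 + b\<^sup>2"
proof -
  have h1: "2 * \<bar>a\<bar> * \<bar>b\<bar> \<le> \<bar>a\<bar>\<^sup>2 + \<bar>b\<bar>\<^sup>2" using sum_squares_bound[of "\<bar>a\<bar>" "\<bar>b\<bar>"] by simp
  have h2: "\<bar>a\<bar> * \<bar>b\<bar> \<ge> 0" by simp
  have h3: "\<bar>a\<bar>\<^sup>2 = a\<^sup>2" "\<bar>b\<bar>\<^sup>2 = b\<^sup>2" by simp_all
  have "\<bar>a\<bar> * \<bar>b\<bar> \<le> a\<^sup>2 + b\<^sup>2" using h1 h2 h3 by linarith
  then show ?thesis by (simp add: abs_mult)
qed

lemma inner_bound: "\<bar>inner (a::'a::real_inner) b\<bar> \<le> (norm a)\<^sup>2 + (norm b)\<^sup>2"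
proof -
  have "\<bar>inner a b\<bar> \<le> norm a * norm b" by (rule Cauchy_Schwarz_ineq2)
  also have "\<dots> \<le> (norm a)\<^sup>2 + (norm b)\<^sup>2" using prod_bound[of "norm a" "norm b"] by simp
  finally show ?thesis .
qed

lemma exp_step:
  fixes M F :: "'s measure" and W D r :: "'s \<Rightarrow> 'a::euclidean_space" and Qd P Pn :: "'s \<Rightarrow> real"
  assumes M: "prob_space M" and sub: "subalgebra M F"
    and mW: "W \<in> borel_measurable F" and mr: "r \<in> borel_measurable F"
    and mD: "D \<in> borel_measurable M"
    and mQ: "Qd \<in> borel_measurable M"
    and intP: "integrable M P" and P0: "\<And>s. P s \<ge> 0"
    and C: "C \<ge> 0" and bW: "\<And>s. (norm (W s))\<^sup>2 \<le> C * P s" and br: "\<And>s. (norm (r s))\<^sup>2 \<le> C * P s"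
    and kap: "\<kappa> \<ge> 0" and omg: "om \<ge> 0" and cc: "cc \<ge> 0"
    and Q0: "\<And>s. 0 \<le> Qd s" and Qle: "\<And>s. Qd s + \<kappa> * om * (norm (r s))\<^sup>2 \<le> cc * P s"
    and unb: "\<And>i. i \<in> Basis \<Longrightarrow> AE s in M. real_cond_exp M F (\<lambda>s. inner (D s) i) s = inner (r s) i"
    and var: "AE s in M. nn_cond_exp M F (\<lambda>s. ennreal ((norm (D s - r s))\<^sup>2)) s \<le> ennreal (om * (norm (r s))\<^sup>2)"
    and Pn: "\<And>s. Pn s = Qd s + \<kappa> * om * (norm (r s))\<^sup>2 + 2 * inner (W s) (D s - r s) + \<kappa> * ((norm (D s - r s))\<^sup>2 - om * (norm (r s))\<^sup>2)"
    and Pn0: "\<And>s. Pn s \<ge> 0"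
  shows "(\<integral>\<^sup>+ s. ennreal (Pn s) \<partial>M) \<le> ennreal cc * (\<integral>\<^sup>+ s. ennreal (P s) \<partial>M)"
proof -
  interpret prob_space M by (rule M)
  interpret fs: finite_measure_subalgebra M F by unfold_locales (rule sub)
  have mW': "W \<in> borel_measurable M" by (rule measurable_from_subalg[OF sub mW])
  have mr': "r \<in> borel_measurable M" by (rule measurable_from_subalg[OF sub mr])
  define Z where "Z = (\<lambda>s. D s - r s)"
  have mZ: "Z \<in> borel_measurable M" unfolding Z_def using mD mr' by measurable
  have intC: "integrable M (\<lambda>s. C * P s)" using intP by simp
  have int_r2: "integrable M (\<lambda>s. (norm (r s))\<^sup>2)"
    by (rule Bochner_Integration.integrable_bound[OF intC]) (use mr' br P0 C in auto)
  have int_W2: "integrable M (\<lambda>s. (norm (W s))\<^sup>2)"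
    by (rule Bochner_Integration.integrable_bound[OF intC]) (use mW' bW P0 C in auto)
  have nnZ: "(\<integral>\<^sup>+ s. ennreal ((norm (Z s))\<^sup>2) \<partial>M) \<le> (\<integral>\<^sup>+ s. ennreal (om * (norm (r s))\<^sup>2) \<partial>M)"
  proof -
    have "(\<integral>\<^sup>+ s. ennreal ((norm (Z s))\<^sup>2) \<partial>M) = (\<integral>\<^sup>+ s. 1 * ennreal ((norm (Z s))\<^sup>2) \<partial>M)" by simp
    also have "\<dots> = (\<integral>\<^sup>+ s. 1 * nn_cond_exp M F (\<lambda>s. ennreal ((norm (Z s))\<^sup>2)) s \<partial>M)"
      by (rule fs.nn_cond_exp_intg[symmetric]) (use mZ in auto)
    also have "\<dots> \<le> (\<integral>\<^sup>+ s. ennreal (om * (norm (r s))\<^sup>2) \<partial>M)"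
      by (rule nn_integral_mono_AE) (use var in \<open>auto simp: Z_def\<close>)
    finally show ?thesis .
  qed
  have int_or2: "integrable M (\<lambda>s. om * (norm (r s))\<^sup>2)" using int_r2 by simp
  have eq_or2: "(\<integral>\<^sup>+ s. ennreal (om * (norm (r s))\<^sup>2) \<partial>M) = ennreal (\<integral> s. om * (norm (r s))\<^sup>2 \<partial>M)"
    by (rule nn_integral_eq_integral[OF int_or2]) (use omg in auto)
  have int_Z2: "integrable M (\<lambda>s. (norm (Z s))\<^sup>2)"
    by (rule integrableI_nonneg) (use mZ nnZ eq_or2 in \<open>auto simp: top.not_eq_extremum intro: le_less_trans\<close>)
  have EZ: "(\<integral> s. (norm (Z s))\<^sup>2 \<partial>M) \<le> om * (\<integral> s. (norm (r s))\<^sup>2 \<partial>M)"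
  proof -
    have "ennreal (\<integral> s. (norm (Z s))\<^sup>2 \<partial>M) = (\<integral>\<^sup>+ s. ennreal ((norm (Z s))\<^sup>2) \<partial>M)"
      by (rule nn_integral_eq_integral[OF int_Z2, symmetric]) auto
    also have "\<dots> \<le> ennreal (\<integral> s. om * (norm (r s))\<^sup>2 \<partial>M)" using nnZ eq_or2 by simp
    finally have "(\<integral> s. (norm (Z s))\<^sup>2 \<partial>M) \<le> (\<integral> s. om * (norm (r s))\<^sup>2 \<partial>M)"
      using omg by (simp add: ennreal_le_iff integral_nonneg_AE)
    then show ?thesis by simp
  qed
  have int_D2: "integrable M (\<lambda>s. (norm (D s))\<^sup>2)"
  proof (rule Bochner_Integration.integrable_bound[of _ "\<lambda>s. 2 * (norm (r s))\<^sup>2 + 2 * (norm (Z s))\<^sup>2"])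
    show "integrable M (\<lambda>s. 2 * (norm (r s))\<^sup>2 + 2 * (norm (Z s))\<^sup>2)" using int_r2 int_Z2 by simp
    show "(\<lambda>s. (norm (D s))\<^sup>2) \<in> borel_measurable M" using mD by measurable
    show "AE s in M. norm ((norm (D s))\<^sup>2) \<le> norm (2 * (norm (r s))\<^sup>2 + 2 * (norm (Z s))\<^sup>2)"
    proof (intro AE_I2)
      fix s
      have "D s = r s + Z s" unfolding Z_def by simp
      then have "norm (D s) \<le> norm (r s) + norm (Z s)" by (simp add: norm_triangle_ineq)
      then have "(norm (D s))\<^sup>2 \<le> (norm (r s) + norm (Z s))\<^sup>2" by (intro power_mono) auto
      also have "\<dots> \<le> 2 * (norm (r s))\<^sup>2 + 2 * (norm (Z s))\<^sup>2"
        using sum_squares_bound[of "norm (r s)" "norm (Z s)"] by (simp add: power2_sum)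
      finally show "norm ((norm (D s))\<^sup>2) \<le> norm (2 * (norm (r s))\<^sup>2 + 2 * (norm (Z s))\<^sup>2)" by simp
    qed
  qed
  have comp0: "(\<integral> s. inner (W s) i * inner (Z s) i \<partial>M) = 0"
    and comp_int: "integrable M (\<lambda>s. inner (W s) i * inner (Z s) i)" if i: "i \<in> Basis" for i
  proof -
    have bnd: "\<bar>inner a i * inner b i\<bar> \<le> (norm a)\<^sup>2 + (norm b)\<^sup>2" for a b :: 'a
    proof -
      have "(inner a i)\<^sup>2 \<le> (norm a)\<^sup>2" using Basis_le_norm[OF i, of a] abs_le_square_iff[of "inner a i" "norm a"] by simp
      moreover have "(inner b i)\<^sup>2 \<le> (norm b)\<^sup>2" using Basis_le_norm[OF i, of b] abs_le_square_iff[of "inner b i" "norm b"] by simp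
      ultimately show ?thesis using prod_bound[of "inner a i" "inner b i"] by linarith
    qed
    have i1: "integrable M (\<lambda>s. inner (W s) i * inner (D s) i)"
      by (rule Bochner_Integration.integrable_bound[of _ "\<lambda>s. (norm (W s))\<^sup>2 + (norm (D s))\<^sup>2"]) (use int_W2 int_D2 mW' mD bnd in auto)
    have i2: "integrable M (\<lambda>s. inner (W s) i * inner (r s) i)"
      by (rule Bochner_Integration.integrable_bound[of _ "\<lambda>s. (norm (W s))\<^sup>2 + (norm (r s))\<^sup>2"]) (use int_W2 int_r2 mW' mr' bnd in auto)
    have mWi: "(\<lambda>s. inner (W s) i) \<in> borel_measurable F" using mW by measurable
    have mDi: "(\<lambda>s. inner (D s) i) \<in> borel_measurable M" using mD by measurable
    have "(\<integral> s. inner (W s) i * inner (D s) i \<partial>M) = (\<integral> s. inner (W s) i * real_cond_exp M F (\<lambda>s. inner (D s) i) s \<partial>M)"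
      by (rule fs.real_cond_exp_intg(2)[OF i1 mWi mDi, symmetric])
    also have "\<dots> = (\<integral> s. inner (W s) i * inner (r s) i \<partial>M)"
    proof (rule integral_cong_AE)
      show "(\<lambda>s. inner (W s) i * real_cond_exp M F (\<lambda>s. inner (D s) i) s) \<in> borel_measurable M"
        using mW' by measurable
      show "(\<lambda>s. inner (W s) i * inner (r s) i) \<in> borel_measurable M" using mW' mr' by measurable
      show "AE s in M. inner (W s) i * real_cond_exp M F (\<lambda>s. inner (D s) i) s = inner (W s) i * inner (r s) i"
        using unb[OF i] by eventually_elim simp
    qed
    finally have e: "(\<integral> s. inner (W s) i * inner (D s) i \<partial>M) = (\<integral> s. inner (W s) i * inner (r s) i \<partial>M)" .
    have eqf: "(\<lambda>s. inner (W s) i * inner (Z s) i) = (\<lambda>s. inner (W s) i * inner (D s) i - inner (W s) i * inner (r s) i)"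
      unfolding Z_def by (simp add: inner_diff_left algebra_simps)
    show "integrable M (\<lambda>s. inner (W s) i * inner (Z s) i)" unfolding eqf by (rule Bochner_Integration.integrable_diff[OF i1 i2])
    show "(\<integral> s. inner (W s) i * inner (Z s) i \<partial>M) = 0" unfolding eqf Bochner_Integration.integral_diff[OF i1 i2] e by simp
  qed
  have int_WZ: "integrable M (\<lambda>s. inner (W s) (Z s))"
  proof -
    have eq: "(\<lambda>s. inner (W s) (Z s)) = (\<lambda>s. \<Sum>i\<in>Basis. inner (W s) i * inner (Z s) i)"
      by (rule ext) (rule euclidean_inner)
    show ?thesis unfolding eq by (rule Bochner_Integration.integrable_sum) (rule comp_int)
  qed
  have EWZ: "(\<integral> s. inner (W s) (Z s) \<partial>M) = 0"
  proof -
    have eq: "(\<lambda>s. inner (W s) (Z s)) = (\<lambda>s. \<Sum>i\<in>Basis. inner (W s) i * inner (Z s) i)"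
      by (rule ext) (rule euclidean_inner)
    have "(\<integral> s. inner (W s) (Z s) \<partial>M) = (\<Sum>i\<in>Basis. \<integral> s. inner (W s) i * inner (Z s) i \<partial>M)"
      unfolding eq by (rule Bochner_Integration.integral_sum) (rule comp_int)
    also have "\<dots> = 0" using comp0 by simp
    finally show ?thesis .
  qed
  have int_Q: "integrable M Qd"
  proof (rule Bochner_Integration.integrable_bound[of _ "\<lambda>s. cc * P s"])
    show "integrable M (\<lambda>s. cc * P s)" using intP by simp
    show "AE s in M. norm (Qd s) \<le> norm (cc * P s)"
    proof (intro AE_I2)
      fix s
      have "\<kappa> * om * (norm (r s))\<^sup>2 \<ge> 0" using kap omg by simp
      then show "norm (Qd s) \<le> norm (cc * P s)" using Qle[of s] Q0[of s] cc P0[of s] by simp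
    qed
  qed (rule mQ)
  have PnZ: "Pn = (\<lambda>s. (Qd s + \<kappa> * om * (norm (r s))\<^sup>2) + 2 * inner (W s) (Z s) + \<kappa> * (norm (Z s))\<^sup>2 - \<kappa> * (om * (norm (r s))\<^sup>2))"
    unfolding Z_def by (rule ext) (simp add: Pn algebra_simps)
  have int_Pn: "integrable M Pn" unfolding PnZ using int_Q int_r2 int_WZ int_Z2 by simp
  have "(\<integral> s. Pn s \<partial>M) = (\<integral> s. Qd s + \<kappa> * om * (norm (r s))\<^sup>2 \<partial>M) + 2 * (\<integral> s. inner (W s) (Z s) \<partial>M)
        + \<kappa> * (\<integral> s. (norm (Z s))\<^sup>2 \<partial>M) - \<kappa> * (om * (\<integral> s. (norm (r s))\<^sup>2 \<partial>M))"
    unfolding PnZ using int_Q int_r2 int_WZ int_Z2 by simp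
  also have "\<dots> \<le> (\<integral> s. Qd s + \<kappa> * om * (norm (r s))\<^sup>2 \<partial>M)"
    using EWZ mult_left_mono[OF EZ kap] by simp
  also have "\<dots> \<le> (\<integral> s. cc * P s \<partial>M)"
    by (rule integral_mono) (use int_Q int_r2 intP Qle in auto)
  also have "\<dots> = cc * (\<integral> s. P s \<partial>M)" by simp
  finally have le: "(\<integral> s. Pn s \<partial>M) \<le> cc * (\<integral> s. P s \<partial>M)" .
  have "(\<integral>\<^sup>+ s. ennreal (Pn s) \<partial>M) = ennreal (\<integral> s. Pn s \<partial>M)"
    by (rule nn_integral_eq_integral[OF int_Pn]) (use Pn0 in auto)
  also have "\<dots> \<le> ennreal (cc * (\<integral> s. P s \<partial>M))" using le by (rule ennreal_leI)
  also have "\<dots> = ennreal cc * ennreal (\<integral> s. P s \<partial>M)" using cc P0 by (simp add: ennreal_mult integral_nonneg)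
  also have "ennreal (\<integral> s. P s \<partial>M) = (\<integral>\<^sup>+ s. ennreal (P s) \<partial>M)"
    by (rule nn_integral_eq_integral[OF intP, symmetric]) (use P0 in auto)
  finally show ?thesis .
qed

lemma cont2:
  fixes \<Phi> :: "'a::real_normed_vector \<Rightarrow> 'b::real_normed_vector \<Rightarrow> 'c::real_normed_vector"
  assumes b: "\<And>a b a' b'. norm (\<Phi> a b - \<Phi> a' b') \<le> C1 * norm (a - a') + C2 * norm (b - b')"
    and C: "C1 \<ge> 0" "C2 \<ge> 0"
  shows "continuous_on UNIV (\<lambda>p. \<Phi> (fst p) (snd p))"
proof (rule lipschitz_on_continuous_on)
  show "(C1 + C2)-lipschitz_on UNIV (\<lambda>p. \<Phi> (fst p) (snd p))"
  proof (rule lipschitz_onI)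
    fix p q :: "'a \<times> 'b"
    have "dist (\<Phi> (fst p) (snd p)) (\<Phi> (fst q) (snd q)) \<le> C1 * dist (fst p) (fst q) + C2 * dist (snd p) (snd q)"
      using b by (simp add: dist_norm)
    also have "\<dots> \<le> C1 * dist p q + C2 * dist p q"
      using C dist_fst_le[of p q] dist_snd_le[of p q] by (intro add_mono mult_left_mono) auto
    finally show "dist (\<Phi> (fst p) (snd p)) (\<Phi> (fst q) (snd q)) \<le> (C1 + C2) * dist p q"
      by (simp add: algebra_simps)
  qed (use C in simp)
qed

lemma lin_sq:
  fixes v :: "'a::real_normed_vector"
  assumes "norm v \<le> A1 * a + A2 * b" "A1 \<ge> 0" "A2 \<ge> 0" "a \<ge> 0" "b \<ge> 0" "\<gamma> > 0" "K > 0"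
  shows "(norm v)\<^sup>2 \<le> (2 * A1\<^sup>2 * \<gamma> + 2 * A2\<^sup>2 / K) * ((1 / \<gamma>) * a\<^sup>2 + K * b\<^sup>2)"
proof -
  have "(norm v)\<^sup>2 \<le> (A1 * a + A2 * b)\<^sup>2" using assms(1) by (intro power_mono) auto
  also have "\<dots> \<le> 2 * (A1 * a)\<^sup>2 + 2 * (A2 * b)\<^sup>2"
    using sum_squares_bound[of "A1 * a" "A2 * b"] by (simp add: power2_sum)
  also have "\<dots> = (2 * A1\<^sup>2 * \<gamma>) * ((1 / \<gamma>) * a\<^sup>2) + (2 * A2\<^sup>2 / K) * (K * b\<^sup>2)"
    using assms(6,7) by (simp add: power_mult_distrib field_simps)
  also have "\<dots> \<le> (2 * A1\<^sup>2 * \<gamma> + 2 * A2\<^sup>2 / K) * ((1 / \<gamma>) * a\<^sup>2 + K * b\<^sup>2)"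
    using assms(6,7) by (simp add: algebra_simps add_nonneg_nonneg mult_nonneg_nonneg)
  finally show ?thesis .
qed

lemma quad_id:
  fixes P Q Z :: "'a::real_inner"
  assumes g: "\<gamma> > 0"
  shows "(1 / \<gamma>) * (norm (P - \<alpha> *\<^sub>R Z))\<^sup>2 + K * (norm (Q + \<beta> *\<^sub>R Z))\<^sup>2
       = ((1 / \<gamma>) * (norm P)\<^sup>2 + K * (norm Q)\<^sup>2) + 2 * inner (- (\<alpha> / \<gamma>) *\<^sub>R P + (K * \<beta>) *\<^sub>R Q) Z
         + (\<alpha>\<^sup>2 / \<gamma> + K * \<beta>\<^sup>2) * (norm Z)\<^sup>2"
  unfolding power2_norm_eq_inner
  by (simp add: inner_add_left inner_add_right inner_diff_left inner_diff_right inner_commute)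
     (use g in \<open>simp add: field_simps power2_eq_square\<close>)

lemma filt_sub:
  fixes x u :: "nat \<Rightarrow> 's \<Rightarrow> 'a::euclidean_space"
  assumes mx: "x t \<in> borel_measurable M" and mu: "u t \<in> borel_measurable M"
    and allm: "\<And>i. i \<le> t \<Longrightarrow> (\<lambda>s. (x i s, u i s)) \<in> borel_measurable M"
  shows "subalgebra M (gen_filtration M x u t)"
    and "(\<lambda>s. (x t s, u t s)) \<in> borel_measurable (gen_filtration M x u t)"
proof -
  define G where "G = {(\<lambda>s. (x i s, u i s)) -` B \<inter> space M | i B. i \<le> t \<and> B \<in> sets (borel :: ('a \<times> 'a) measure)}"
  have GP: "G \<subseteq> Pow (space M)" unfolding G_def by auto
  have GM: "G \<subseteq> sets M" unfolding G_def using allm by (auto intro: measurable_sets)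
  have sp: "space (gen_filtration M x u t) = space M" unfolding gen_filtration_def G_def[symmetric]
    using GP by simp
  have st: "sets (gen_filtration M x u t) = sigma_sets (space M) G" unfolding gen_filtration_def G_def[symmetric]
    using GP by simp
  show "subalgebra M (gen_filtration M x u t)"
    unfolding subalgebra_def sp st using sets.sigma_sets_subset[OF GM] by simp
  show "(\<lambda>s. (x t s, u t s)) \<in> borel_measurable (gen_filtration M x u t)"
  proof (rule measurableI)
    fix B :: "('a \<times> 'a) set" assume "B \<in> sets borel"
    then have "(\<lambda>s. (x t s, u t s)) -` B \<inter> space M \<in> G" unfolding G_def by blast
    then show "(\<lambda>s. (x t s, u t s)) -` B \<inter> space (gen_filtration M x u t) \<in> sets (gen_filtration M x u t)"
      unfolding sp st by auto
  qed simp
qed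

lemma id_aux:
  fixes \<gamma> Om om P2 Q2 R2 K :: real
  assumes "\<gamma> > 0" "Om > 0"
  shows "(1 / \<gamma>) * (P2 + om * R2 / Om\<^sup>2) + K * (Q2 + om * R2 / (\<gamma> * Om * Om)\<^sup>2)
       = (1 / \<gamma>) * P2 + K * Q2 + ((1 / Om)\<^sup>2 / \<gamma> + K * (1 / (\<gamma> * Om\<^sup>2))\<^sup>2) * om * R2"
proof -
  have a: "(1 / \<gamma>) * (om * R2 / Om\<^sup>2) = ((1 / Om)\<^sup>2 / \<gamma>) * om * R2"
    by (simp add: power_one_over)
  have b: "(\<gamma> * Om * Om)\<^sup>2 = (\<gamma> * Om\<^sup>2)\<^sup>2" by (simp add: power2_eq_square)
  have c: "K * (om * R2 / (\<gamma> * Om\<^sup>2)\<^sup>2) = K * (1 / (\<gamma> * Om\<^sup>2))\<^sup>2 * om * R2"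
    by (simp add: power_one_over)
  show ?thesis unfolding b using a c by (simp add: algebra_simps)
qed

lemma conv_aux:
  fixes X :: "nat \<Rightarrow> 'a::real_normed_vector"
  assumes P: "(\<lambda>t. P t) \<longlonglongrightarrow> 0" and b: "\<And>t. norm (X t - l) \<le> sqrt (k * P t)" and k: "k \<ge> 0"
  shows "X \<longlonglongrightarrow> l"
proof -
  have "(\<lambda>t. sqrt (k * P t)) \<longlonglongrightarrow> sqrt (k * 0)" by (intro tendsto_intros P)
  then have s: "(\<lambda>t. sqrt (k * P t)) \<longlonglongrightarrow> 0" by simp
  have "(\<lambda>t. norm (X t - l)) \<longlonglongrightarrow> 0"
    by (rule real_tendsto_sandwich[OF _ _ tendsto_const s]) (use b in auto)
  then have "(\<lambda>t. X t - l) \<longlonglongrightarrow> 0" by (simp add: tendsto_norm_zero_iff)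
  then show ?thesis by (rule LIM_zero_cancel)
qed

theorem theorem9:
  fixes f :: "'a::euclidean_space \<Rightarrow> real" and gradf :: "'a \<Rightarrow> 'a"
    and g h :: "'a \<Rightarrow> ereal"
    and Lf muf mug muh \<gamma> om :: real
    and M :: "'s measure"
    and R :: "nat \<Rightarrow> 's \<Rightarrow> 'a \<Rightarrow> 'a"
    and x u :: "nat \<Rightarrow> 's \<Rightarrow> 'a"
    and x0 u0 xs us :: 'a
  assumes f_grad: "\<And>y. (f has_derivative (\<lambda>v. inner (gradf y) v)) (at y)"
    and f_convex: "convex_on UNIV f"
    and f_smooth: "\<And>y z. norm (gradf y - gradf z) \<le> Lf * norm (y - z)"
    and g_pcc: "pcc g" and h_pcc: "pcc h"
    and f_sc: "muf \<ge> 0" "convex_on UNIV (\<lambda>y. f y - muf / 2 * (norm y)\<^sup>2)"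
    and g_sc: "strongly_convex_fun mug g"
    and h_sc: "strongly_convex_fun muh (conjugate h)"
    and kkt: "\<exists>xk uk. - gradf xk - uk \<in> subdiff g xk \<and> xk \<in> subdiff (conjugate h) uk"
    and xs_opt: "\<And>y. ereal (f xs) + g xs + h xs \<le> ereal (f y) + g y + h y"
    and us_opt: "\<And>v. conjugate (\<lambda>y. ereal (f y) + g y) (- us) + conjugate h us
                      \<le> conjugate (\<lambda>y. ereal (f y) + g y) (- v) + conjugate h v"
    and mu_pos: "muf > 0 \<or> mug > 0" and muh_pos: "muh > 0"
    and gamma: "\<gamma> > 0" "\<gamma> * Lf < 2"
    and om: "om \<ge> 0"
    and M: "prob_space M"
    and x_init: "\<And>s. x 0 s = x0" and u_init: "\<And>s. u 0 s = u0"
    and x_step: "\<And>t s. x (Suc t) s =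
        dy_xhat \<gamma> gradf g (x t s) (u t s)
        - (1 / (1 + om)) *\<^sub>R R t s (dy_res \<gamma> om h (dy_xhat \<gamma> gradf g (x t s) (u t s)) (u t s))"
    and u_step: "\<And>t s. u (Suc t) s = u t s
        + (1 / (\<gamma> * (1 + om)\<^sup>2)) *\<^sub>R R t s (dy_res \<gamma> om h (dy_xhat \<gamma> gradf g (x t s) (u t s)) (u t s))"
    and R_meas: "\<And>t. (\<lambda>s. R t s (dy_res \<gamma> om h (dy_xhat \<gamma> gradf g (x t s) (u t s)) (u t s)))
                        \<in> borel_measurable M"
    and R_integrable: "\<And>t. integrable M
          (\<lambda>s. R t s (dy_res \<gamma> om h (dy_xhat \<gamma> gradf g (x t s) (u t s)) (u t s)))"
    and R_unbiased: "\<And>t i. i \<in> Basis \<Longrightarrow> AE s in M.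
          real_cond_exp M (gen_filtration M x u t)
            (\<lambda>s'. inner (R t s' (dy_res \<gamma> om h (dy_xhat \<gamma> gradf g (x t s') (u t s')) (u t s'))) i) s
          = inner (dy_res \<gamma> om h (dy_xhat \<gamma> gradf g (x t s) (u t s)) (u t s)) i"
    and R_variance: "\<And>t. AE s in M.
          nn_cond_exp M (gen_filtration M x u t)
            (\<lambda>s'. ennreal ((norm (R t s' (dy_res \<gamma> om h (dy_xhat \<gamma> gradf g (x t s') (u t s')) (u t s'))
                              - dy_res \<gamma> om h (dy_xhat \<gamma> gradf g (x t s') (u t s')) (u t s')))\<^sup>2)) s
          \<le> ennreal (om * (norm (dy_res \<gamma> om h (dy_xhat \<gamma> gradf g (x t s) (u t s)) (u t s)))\<^sup>2)"
  shows "let c = max ((1 - \<gamma> * muf)\<^sup>2 / (1 + \<gamma> * mug))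
                 (max ((\<gamma> * Lf - 1)\<^sup>2 / (1 + \<gamma> * mug))
                      (1 - (2 / \<gamma> * muh) / ((1 + om) * (1 + om + 2 / \<gamma> * muh))))
         in c < 1
          \<and> (\<forall>t. (\<integral>\<^sup>+ s. ennreal (dy_lyap \<gamma> om muh xs us (x t s) (u t s)) \<partial>M)
                  \<le> ennreal (c ^ t * dy_lyap \<gamma> om muh xs us x0 u0))
          \<and> (AE s in M. (\<lambda>t. x t s) \<longlonglongrightarrow> xs
                      \<and> (\<lambda>t. dy_xhat \<gamma> gradf g (x t s) (u t s)) \<longlonglongrightarrow> xs
                      \<and> (\<lambda>t. u t s) \<longlonglongrightarrow> us)"
proof -
  obtain xk uk where kg0: "- gradf xk - uk \<in> subdiff g xk" and kh0: "xk \<in> subdiff (conjugate h) uk"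
    using kkt by blast
  interpret D0: dys f gradf g h Lf muf mug muh \<gamma> om xk uk
    by unfold_locales (use f_grad f_smooth g_pcc h_pcc f_sc g_sc h_sc muh_pos gamma om kg0 kh0 in auto)
  have xe: "xs = xk" by (rule D0.xs_eq[OF xs_opt mu_pos])
  have ue: "us = uk" by (rule D0.us_eq[OF us_opt])
  interpret D: dys f gradf g h Lf muf mug muh \<gamma> om xs us
    by unfold_locales (use f_grad f_smooth g_pcc h_pcc f_sc g_sc h_sc muh_pos gamma om kg0 kh0 xe ue in auto)
  define c where "c = D.cc"
  have c_eq: "max ((1 - \<gamma> * muf)\<^sup>2 / (1 + \<gamma> * mug))
                 (max ((\<gamma> * Lf - 1)\<^sup>2 / (1 + \<gamma> * mug))
                      (1 - (2 / \<gamma> * muh) / ((1 + om) * (1 + om + 2 / \<gamma> * muh)))) = c"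
    by (simp add: c_def D.cc_def)
  have c1: "c < 1" unfolding c_def by (rule D.cc_lt1[OF mu_pos gamma(2)])
  have c0: "c \<ge> 0" unfolding c_def by (rule D.cc_nonneg)
  interpret P: prob_space M by (rule M)
  define xh where "xh = (\<lambda>t s. dy_xhat \<gamma> gradf g (x t s) (u t s))"
  define r where "r = (\<lambda>t s. dy_res \<gamma> om h (xh t s) (u t s))"
  define Dd where "Dd = (\<lambda>t s. R t s (r t s))"
  define Psi where "Psi = (\<lambda>t s. dy_lyap \<gamma> om muh xs us (x t s) (u t s))"
  define F where "F = (\<lambda>t. gen_filtration M x u t)"
  define \<alpha> where "\<alpha> = 1 / (1 + om)"
  define \<beta> where "\<beta> = 1 / (\<gamma> * (1 + om)\<^sup>2)"
  define K where "K = D.KK"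
  have Kdef: "K = (1 + om) * (\<gamma> * (1 + om) + 2 * muh)" unfolding K_def D.KK_def by simp
  have Kp: "K > 0" unfolding Kdef using gamma om muh_pos by (simp add: add_pos_nonneg)
  have xS: "x (Suc t) s = xh t s - \<alpha> *\<^sub>R Dd t s" for t s
    using x_step unfolding xh_def r_def Dd_def \<alpha>_def by simp
  have uS: "u (Suc t) s = u t s + \<beta> *\<^sub>R Dd t s" for t s
    using u_step unfolding xh_def r_def Dd_def \<beta>_def by simp
  have mDd: "Dd t \<in> borel_measurable M" for t
    using R_meas unfolding Dd_def r_def xh_def by simp
  have unb: "AE s in M. real_cond_exp M (F t) (\<lambda>s. inner (Dd t s) i) s = inner (r t s) i" if "i \<in> Basis" for t i
    using R_unbiased[OF that] unfolding Dd_def r_def xh_def F_def by simp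
  have var: "AE s in M. nn_cond_exp M (F t) (\<lambda>s. ennreal ((norm (Dd t s - r t s))\<^sup>2)) s \<le> ennreal (om * (norm (r t s))\<^sup>2)" for t
    using R_variance unfolding Dd_def r_def xh_def F_def by simp
  have L0: "Lf \<ge> 0" by (rule D.Lf_nonneg)
  define PhX where "PhX = (\<lambda>p. dy_xhat \<gamma> gradf g (fst p) (snd p))"
  define PhR where "PhR = (\<lambda>p. dy_res \<gamma> om h (dy_xhat \<gamma> gradf g (fst p) (snd p)) (snd p))"
  have cX: "continuous_on UNIV PhX" unfolding PhX_def
    by (rule cont2[of _ "1 + \<gamma> * Lf" \<gamma>]) (use D.xh_lip gamma L0 in auto)
  have bXR: "norm (dy_res \<gamma> om h (dy_xhat \<gamma> gradf g a b) b - dy_res \<gamma> om h (dy_xhat \<gamma> gradf g a' b') b')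
     \<le> (2 * (1 + \<gamma> * Lf)) * norm (a - a') + (2 * \<gamma> + \<gamma> * (1 + om)) * norm (b - b')" for a b a' b'
  proof -
    have "norm (dy_res \<gamma> om h (dy_xhat \<gamma> gradf g a b) b - dy_res \<gamma> om h (dy_xhat \<gamma> gradf g a' b') b')
      \<le> 2 * norm (dy_xhat \<gamma> gradf g a b - dy_xhat \<gamma> gradf g a' b') + \<gamma> * (1 + om) * norm (b - b')"
      by (rule D.res_lip)
    also have "\<dots> \<le> 2 * ((1 + \<gamma> * Lf) * norm (a - a') + \<gamma> * norm (b - b')) + \<gamma> * (1 + om) * norm (b - b')"
      using D.xh_lip[of a b a' b'] by simp
    finally show ?thesis by (simp add: algebra_simps)
  qed
  have cR: "continuous_on UNIV PhR" unfolding PhR_def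
    by (rule cont2[OF bXR]) (use gamma L0 om in auto)
  have meas: "x t \<in> borel_measurable M \<and> u t \<in> borel_measurable M" for t
  proof (induction t)
    case 0
    have "x 0 = (\<lambda>_. x0)" "u 0 = (\<lambda>_. u0)" using x_init u_init by auto
    then show ?case by simp
  next
    case (Suc t)
    then have mx: "x t \<in> borel_measurable M" and mu: "u t \<in> borel_measurable M" by auto
    have "(\<lambda>s. PhX (x t s, u t s)) \<in> borel_measurable M"
      by (rule borel_measurable_continuous_on[OF cX]) (use mx mu in measurable)
    then have mxh: "xh t \<in> borel_measurable M" unfolding PhX_def xh_def by simp
    have "x (Suc t) = (\<lambda>s. xh t s - \<alpha> *\<^sub>R Dd t s)" using xS by auto
    moreover have "u (Suc t) = (\<lambda>s. u t s + \<beta> *\<^sub>R Dd t s)" using uS by auto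
    ultimately show ?case using mxh mu mDd[of t] by simp
  qed
  have mP: "(\<lambda>s. (x t s, u t s)) \<in> borel_measurable M" for t using meas[of t] by (intro borel_measurable_Pair) auto
  have sub: "subalgebra M (F t)" for t
    unfolding F_def by (rule filt_sub(1)) (use meas mP in auto)
  have mPF: "(\<lambda>s. (x t s, u t s)) \<in> borel_measurable (F t)" for t
    unfolding F_def by (rule filt_sub(2)) (use meas mP in auto)
  have rF: "r t \<in> borel_measurable (F t)" for t
  proof -
    have "(\<lambda>s. PhR (x t s, u t s)) \<in> borel_measurable (F t)"
      by (rule borel_measurable_continuous_on[OF cR mPF])
    then show ?thesis unfolding PhR_def r_def xh_def by simp
  qed
  define W where "W = (\<lambda>t s. - (\<alpha> / \<gamma>) *\<^sub>R (xh t s - \<alpha> *\<^sub>R r t s - xs) + (K * \<beta>) *\<^sub>R (u t s + \<beta> *\<^sub>R r t s - us))"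
  have WF: "W t \<in> borel_measurable (F t)" for t
  proof -
    have cW: "continuous_on UNIV (\<lambda>p. - (\<alpha> / \<gamma>) *\<^sub>R (PhX p - \<alpha> *\<^sub>R PhR p - xs) + (K * \<beta>) *\<^sub>R (snd p + \<beta> *\<^sub>R PhR p - us))"
      by (intro continuous_intros cX cR)
    have "(\<lambda>s. (\<lambda>p. - (\<alpha> / \<gamma>) *\<^sub>R (PhX p - \<alpha> *\<^sub>R PhR p - xs) + (K * \<beta>) *\<^sub>R (snd p + \<beta> *\<^sub>R PhR p - us)) (x t s, u t s)) \<in> borel_measurable (F t)"
      by (rule borel_measurable_continuous_on[OF cW mPF])
    then show ?thesis unfolding W_def PhR_def PhX_def r_def xh_def by simp
  qed
  have a0: "\<alpha> \<ge> 0" "\<beta> \<ge> 0" unfolding \<alpha>_def \<beta>_def using om gamma by auto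
  define A1 where "A1 = 1 + \<gamma> * Lf"
  define Ar1 where "Ar1 = 2 * A1"
  define Ar2 where "Ar2 = 2 * \<gamma> + \<gamma> * (1 + om)"
  define AW1 where "AW1 = (\<alpha> / \<gamma>) * (A1 + \<alpha> * Ar1) + K * \<beta> * (\<beta> * Ar1)"
  define AW2 where "AW2 = (\<alpha> / \<gamma>) * (\<gamma> + \<alpha> * Ar2) + K * \<beta> * (1 + \<beta> * Ar2)"
  have A0: "A1 \<ge> 0" "Ar1 \<ge> 0" "Ar2 \<ge> 0" "AW1 \<ge> 0" "AW2 \<ge> 0"
    unfolding AW1_def AW2_def Ar1_def Ar2_def A1_def using gamma L0 om a0 Kp by auto
  have bnds: "norm (r t s) \<le> Ar1 * norm (x t s - xs) + Ar2 * norm (u t s - us)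
            \<and> norm (W t s) \<le> AW1 * norm (x t s - xs) + AW2 * norm (u t s - us)" for t s
  proof -
    let ?a = "norm (x t s - xs)" and ?b = "norm (u t s - us)"
    have bX: "norm (xh t s - xs) \<le> A1 * ?a + \<gamma> * ?b"
      using D.xh_lip[of "x t s" "u t s" xs us] D.xh_fix unfolding xh_def A1_def by simp
    have bR: "norm (r t s) \<le> Ar1 * ?a + Ar2 * ?b"
      using bXR[of "x t s" "u t s" xs us] D.xh_fix D.res_fix unfolding r_def xh_def Ar1_def Ar2_def A1_def by simp
    have bP: "norm (xh t s - \<alpha> *\<^sub>R r t s - xs) \<le> (A1 + \<alpha> * Ar1) * ?a + (\<gamma> + \<alpha> * Ar2) * ?b"
    proof -
      have eq: "xh t s - \<alpha> *\<^sub>R r t s - xs = (xh t s - xs) - \<alpha> *\<^sub>R r t s" by (simp add: algebra_simps)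
      have "norm (xh t s - \<alpha> *\<^sub>R r t s - xs) \<le> norm (xh t s - xs) + \<alpha> * norm (r t s)"
        unfolding eq using norm_triangle_ineq4[of "xh t s - xs" "\<alpha> *\<^sub>R r t s"] a0 by simp
      moreover have "\<alpha> * norm (r t s) \<le> \<alpha> * (Ar1 * ?a + Ar2 * ?b)" using bR a0 by (intro mult_left_mono) auto
      ultimately show ?thesis using bX by (simp add: algebra_simps)
    qed
    have bQ: "norm (u t s + \<beta> *\<^sub>R r t s - us) \<le> (\<beta> * Ar1) * ?a + (1 + \<beta> * Ar2) * ?b"
    proof -
      have eq: "u t s + \<beta> *\<^sub>R r t s - us = (u t s - us) + \<beta> *\<^sub>R r t s" by (simp add: algebra_simps)
      have "norm (u t s + \<beta> *\<^sub>R r t s - us) \<le> ?b + \<beta> * norm (r t s)"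
        unfolding eq using norm_triangle_ineq[of "u t s - us" "\<beta> *\<^sub>R r t s"] a0 by simp
      moreover have "\<beta> * norm (r t s) \<le> \<beta> * (Ar1 * ?a + Ar2 * ?b)" using bR a0 by (intro mult_left_mono) auto
      ultimately show ?thesis by (simp add: algebra_simps)
    qed
    have "norm (W t s) \<le> (\<alpha> / \<gamma>) * norm (xh t s - \<alpha> *\<^sub>R r t s - xs) + (K * \<beta>) * norm (u t s + \<beta> *\<^sub>R r t s - us)"
      unfolding W_def using norm_triangle_ineq[of "- (\<alpha> / \<gamma>) *\<^sub>R (xh t s - \<alpha> *\<^sub>R r t s - xs)" "(K * \<beta>) *\<^sub>R (u t s + \<beta> *\<^sub>R r t s - us)"]
        a0 gamma Kp by simp
    also have "\<dots> \<le> (\<alpha> / \<gamma>) * ((A1 + \<alpha> * Ar1) * ?a + (\<gamma> + \<alpha> * Ar2) * ?b) + (K * \<beta>) * ((\<beta> * Ar1) * ?a + (1 + \<beta> * Ar2) * ?b)"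
      using bP bQ a0 gamma Kp by (intro add_mono mult_left_mono) auto
    also have "\<dots> = AW1 * ?a + AW2 * ?b" unfolding AW1_def AW2_def by (simp add: algebra_simps)
    finally show ?thesis using bR by simp
  qed
  have PsiE: "Psi t s = (1 / \<gamma>) * (norm (x t s - xs))\<^sup>2 + K * (norm (u t s - us))\<^sup>2" for t s
    unfolding Psi_def dy_lyap_def Kdef by simp
  have Psi0: "Psi t s \<ge> 0" for t s unfolding PsiE using gamma Kp by simp
  define C where "C = (2 * Ar1\<^sup>2 * \<gamma> + 2 * Ar2\<^sup>2 / K) + (2 * AW1\<^sup>2 * \<gamma> + 2 * AW2\<^sup>2 / K)"
  have C0: "C \<ge> 0" unfolding C_def using gamma Kp by simp
  have br: "(norm (r t s))\<^sup>2 \<le> C * Psi t s" for t s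
  proof -
    have "(norm (r t s))\<^sup>2 \<le> (2 * Ar1\<^sup>2 * \<gamma> + 2 * Ar2\<^sup>2 / K) * Psi t s"
      unfolding PsiE by (rule lin_sq) (use bnds[of t s] A0 gamma Kp in auto)
    also have "\<dots> \<le> C * Psi t s" unfolding C_def using Psi0[of t s] gamma Kp by (intro mult_right_mono) auto
    finally show ?thesis .
  qed
  have bW: "(norm (W t s))\<^sup>2 \<le> C * Psi t s" for t s
  proof -
    have "(norm (W t s))\<^sup>2 \<le> (2 * AW1\<^sup>2 * \<gamma> + 2 * AW2\<^sup>2 / K) * Psi t s"
      unfolding PsiE by (rule lin_sq) (use bnds[of t s] A0 gamma Kp in auto)
    also have "\<dots> \<le> C * Psi t s" unfolding C_def using Psi0[of t s] gamma Kp by (intro mult_right_mono) auto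
    finally show ?thesis .
  qed
  define \<kappa> where "\<kappa> = \<alpha>\<^sup>2 / \<gamma> + K * \<beta>\<^sup>2"
  have k0: "\<kappa> \<ge> 0" unfolding \<kappa>_def using gamma Kp by simp
  define Qd where "Qd = (\<lambda>t s. (1 / \<gamma>) * (norm (xh t s - \<alpha> *\<^sub>R r t s - xs))\<^sup>2 + K * (norm (u t s + \<beta> *\<^sub>R r t s - us))\<^sup>2)"
  have Q0: "Qd t s \<ge> 0" for t s unfolding Qd_def using gamma Kp by simp
  have Qle: "Qd t s + \<kappa> * om * (norm (r t s))\<^sup>2 \<le> c * Psi t s" for t s
  proof -
    have ds: "(1 / \<gamma>) * ((norm (xh t s - (1 / (1 + om)) *\<^sub>R r t s - xs))\<^sup>2 + om * (norm (r t s))\<^sup>2 / (1 + om)\<^sup>2)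
       + K * ((norm (u t s + (1 / (\<gamma> * (1 + om)\<^sup>2)) *\<^sub>R r t s - us))\<^sup>2 + om * (norm (r t s))\<^sup>2 / (\<gamma> * (1 + om) * (1 + om))\<^sup>2)
       \<le> c * Psi t s"
      using D.det_step[of "x t s" "u t s"] unfolding xh_def r_def c_def K_def Psi_def by simp
    have id: "(1 / \<gamma>) * (P2 + om * R2 / (1 + om)\<^sup>2) + K * (Q2 + om * R2 / (\<gamma> * (1 + om) * (1 + om))\<^sup>2)
        = (1 / \<gamma>) * P2 + K * Q2 + \<kappa> * om * R2" for P2 Q2 R2
    proof -
      have o1: "1 + om > 0" using om by simp
      show ?thesis unfolding \<kappa>_def \<alpha>_def \<beta>_def
        using id_aux[of \<gamma> "1 + om" P2 om R2 K Q2, OF gamma(1) o1] by simp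
    qed
    show ?thesis using ds unfolding id Qd_def \<alpha>_def[symmetric] \<beta>_def[symmetric] by simp
  qed
  have PnE: "Psi (Suc t) s = Qd t s + \<kappa> * om * (norm (r t s))\<^sup>2 + 2 * inner (W t s) (Dd t s - r t s)
      + \<kappa> * ((norm (Dd t s - r t s))\<^sup>2 - om * (norm (r t s))\<^sup>2)" for t s
  proof -
    have e1: "x (Suc t) s - xs = (xh t s - \<alpha> *\<^sub>R r t s - xs) - \<alpha> *\<^sub>R (Dd t s - r t s)"
      unfolding xS by (simp add: algebra_simps)
    have e2: "u (Suc t) s - us = (u t s + \<beta> *\<^sub>R r t s - us) + \<beta> *\<^sub>R (Dd t s - r t s)"
      unfolding uS by (simp add: algebra_simps)
    show ?thesis unfolding PsiE e1 e2 quad_id[OF gamma(1)] Qd_def W_def \<kappa>_def by (simp add: algebra_simps)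
  qed
  have mxh: "xh t \<in> borel_measurable M" for t
  proof -
    have "(\<lambda>s. PhX (x t s, u t s)) \<in> borel_measurable M"
      by (rule borel_measurable_continuous_on[OF cX mP])
    then show ?thesis unfolding PhX_def xh_def by simp
  qed
  have mr: "r t \<in> borel_measurable M" for t by (rule measurable_from_subalg[OF sub rF])
  have mQd: "Qd t \<in> borel_measurable M" for t
  proof -
    have [measurable]: "xh t \<in> borel_measurable M" "r t \<in> borel_measurable M" "x t \<in> borel_measurable M" "u t \<in> borel_measurable M"
      using mxh mr meas by auto
    show ?thesis unfolding Qd_def by measurable
  qed
  have mPsi: "Psi t \<in> borel_measurable M" for t
  proof -
    have [measurable]: "x t \<in> borel_measurable M" "u t \<in> borel_measurable M" using meas by auto
    show ?thesis unfolding PsiE by measurable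
  qed
  have step: "(\<integral>\<^sup>+ s. ennreal (Psi (Suc t) s) \<partial>M) \<le> ennreal c * (\<integral>\<^sup>+ s. ennreal (Psi t s) \<partial>M)"
    if fin: "(\<integral>\<^sup>+ s. ennreal (Psi t s) \<partial>M) < \<infinity>" for t
  proof -
    have intP: "integrable M (Psi t)"
      by (rule integrableI_nonneg) (use mPsi fin Psi0 in auto)
    show ?thesis
      by (rule exp_step[OF M sub WF rF mDd mQd intP Psi0 C0 bW br k0 om c0 Q0 Qle unb var PnE Psi0])
  qed
  define Psi00 where "Psi00 = dy_lyap \<gamma> om muh xs us x0 u0"
  have Psi00: "Psi00 \<ge> 0" unfolding Psi00_def dy_lyap_def using gamma om muh_pos by simp
  have bound: "(\<integral>\<^sup>+ s. ennreal (Psi t s) \<partial>M) \<le> ennreal (c ^ t * Psi00)" for t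
  proof (induction t)
    case 0
    have "(\<integral>\<^sup>+ s. ennreal (Psi 0 s) \<partial>M) = (\<integral>\<^sup>+ s. ennreal Psi00 \<partial>M)"
      unfolding Psi_def Psi00_def using x_init u_init by simp
    also have "\<dots> = ennreal Psi00" using P.emeasure_space_1 by simp
    finally show ?case by simp
  next
    case (Suc t)
    have fin: "(\<integral>\<^sup>+ s. ennreal (Psi t s) \<partial>M) < \<infinity>" using Suc.IH by (simp add: le_less_trans)
    have "(\<integral>\<^sup>+ s. ennreal (Psi (Suc t) s) \<partial>M) \<le> ennreal c * (\<integral>\<^sup>+ s. ennreal (Psi t s) \<partial>M)" by (rule step[OF fin])
    also have "\<dots> \<le> ennreal c * ennreal (c ^ t * Psi00)" using Suc.IH by (rule mult_left_mono) simp
    also have "\<dots> = ennreal (c ^ Suc t * Psi00)" using c0 Psi00 by (simp add: ennreal_mult[symmetric] mult.assoc)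
    finally show ?case .
  qed
  have sumb: "summable (\<lambda>t. c ^ t * Psi00)" using c0 c1 by (intro summable_mult2 summable_geometric) simp
  have "(\<integral>\<^sup>+ s. (\<Sum>t. ennreal (Psi t s)) \<partial>M) = (\<Sum>t. \<integral>\<^sup>+ s. ennreal (Psi t s) \<partial>M)"
    by (rule nn_integral_suminf) (use mPsi in measurable)
  also have "\<dots> \<le> (\<Sum>t. ennreal (c ^ t * Psi00))" by (intro suminf_le bound) auto
  also have "\<dots> = ennreal (\<Sum>t. c ^ t * Psi00)" by (rule suminf_ennreal2[OF _ sumb]) (use c0 Psi00 in simp)
  finally have fin: "(\<integral>\<^sup>+ s. (\<Sum>t. ennreal (Psi t s)) \<partial>M) \<noteq> \<infinity>" by (auto simp: top_unique)
  have "AE s in M. (\<Sum>t. ennreal (Psi t s)) \<noteq> \<infinity>"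
    by (rule nn_integral_PInf_AE[OF _ fin]) (use mPsi in measurable)
  then have AEconv: "AE s in M. (\<lambda>t. x t s) \<longlonglongrightarrow> xs \<and> (\<lambda>t. xh t s) \<longlonglongrightarrow> xs \<and> (\<lambda>t. u t s) \<longlonglongrightarrow> us"
  proof eventually_elim
    case (elim s)
    have "summable (\<lambda>t. Psi t s)" by (rule summable_suminf_not_top) (use Psi0 elim in auto)
    then have P0: "(\<lambda>t. Psi t s) \<longlonglongrightarrow> 0" by (rule summable_LIMSEQ_zero)
    have bx: "norm (x t s - xs) \<le> sqrt (\<gamma> * Psi t s)" for t
    proof -
      have "(norm (x t s - xs))\<^sup>2 \<le> \<gamma> * Psi t s" unfolding PsiE using gamma Kp by (simp add: field_simps)
      then show ?thesis by (simp add: real_le_rsqrt)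
    qed
    have bu: "norm (u t s - us) \<le> sqrt ((1 / K) * Psi t s)" for t
    proof -
      have "(norm (u t s - us))\<^sup>2 \<le> (1 / K) * Psi t s" unfolding PsiE using gamma Kp by (simp add: field_simps)
      then show ?thesis by (simp add: real_le_rsqrt)
    qed
    have cx: "(\<lambda>t. x t s) \<longlonglongrightarrow> xs" by (rule conv_aux[OF P0 bx]) (use gamma in simp)
    have cu: "(\<lambda>t. u t s) \<longlonglongrightarrow> us" by (rule conv_aux[OF P0 bu]) (use Kp in simp)
    have "(\<lambda>t. A1 * norm (x t s - xs) + \<gamma> * norm (u t s - us)) \<longlonglongrightarrow> A1 * 0 + \<gamma> * 0"
      using cx cu by (intro tendsto_intros) (simp_all add: LIM_zero_iff tendsto_norm_zero_iff)
    then have z: "(\<lambda>t. A1 * norm (x t s - xs) + \<gamma> * norm (u t s - us)) \<longlonglongrightarrow> 0" by simp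
    have "(\<lambda>t. norm (xh t s - xs)) \<longlonglongrightarrow> 0"
    proof (rule real_tendsto_sandwich[OF _ _ tendsto_const z])
      show "\<forall>\<^sub>F t in sequentially. norm (xh t s - xs) \<le> A1 * norm (x t s - xs) + \<gamma> * norm (u t s - us)"
        using D.xh_lip[of "x t s" "u t s" xs us for t] D.xh_fix unfolding xh_def A1_def by simp
    qed simp
    then have cxh: "(\<lambda>t. xh t s) \<longlonglongrightarrow> xs" by (simp add: tendsto_norm_zero_iff LIM_zero_iff)
    show ?case using cx cxh cu by simp
  qed
  show ?thesis
    unfolding Let_def c_eq
  proof (intro conjI allI)
    show "c < 1" by (rule c1)
    fix t show "(\<integral>\<^sup>+ s. ennreal (dy_lyap \<gamma> om muh xs us (x t s) (u t s)) \<partial>M) \<le> ennreal (c ^ t * dy_lyap \<gamma> om muh xs us x0 u0)"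
      using bound[of t] unfolding Psi_def Psi00_def .
  next
    show "AE s in M. (\<lambda>t. x t s) \<longlonglongrightarrow> xs \<and> (\<lambda>t. dy_xhat \<gamma> gradf g (x t s) (u t s)) \<longlonglongrightarrow> xs \<and> (\<lambda>t. u t s) \<longlonglongrightarrow> us"
      using AEconv unfolding xh_def .
  qed
qed

end
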